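(* Let $P$ be a partition of $\{1,\dots,n+1\}$ and $P'$ a partition of $\{1,\dots,n'+1\}$ ($n,n'\ge 2$). If the groups $Cox({\cal K}(P))$ and $Cox({\cal K}(P'))$ are isomorphic, then the complexes ${\cal K}(P)$ and ${\cal K}(P')$ are isomorphic.
   Context: For a partition $P=(P_1,\dots,P_t)$ of $\{1,\dots,n+1\}$, ${\cal K}(P)$ is the simplicial complex on the vertex set $\{1,\dots,n+1\}\cup\{p_1,\dots,p_t\}$ ($t$ new vertices) whose $n$-faces are the sets $\{y_1,\dots,y_{n+1}\}$ with, for each $i$, $y_i=i$ or $y_i=p_j$ where $i\in P_j$, subject to the $y_i$ being pairwise distinct; its faces are all nonempty subsets of these. For $i\in\{1,\dots,n+1\}$ with $i\in P_j$, let $g_i$ be the permutation of the vertex set of ${\cal K}(P)$ exchanging $i$ and $p_j$ and fixing all other vertices (an automorphism of ${\cal K}(P)$). $Cox({\cal K}(P))$ is the group generated by $g_1,\dots,g_{n+1}$. Complexes are isomorphic if there is a vertex bijection mapping faces exactly onto faces. *)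

theory Defs
  imports "HOL-Algebra.Algebra" "HOL-Library.Disjoint_Sets" "HOL-Combinatorics.Transposition"
begin

text \<open>Vertices of K(P): Inl i for i in {1..n+1}; Inr B is the new vertex p_B attached
  to the block B of the partition P (blocks serve as labels of the new vertices).\<close>
type_synonym vtx = "nat + nat set"

definition KV :: "nat \<Rightarrow> nat set set \<Rightarrow> vtx set" where
  "KV n P = Inl ` {1..n+1} \<union> Inr ` P"

definition K_facets :: "nat \<Rightarrow> nat set set \<Rightarrow> vtx set set" where
  "K_facets n P = { y ` {1..n+1} | y.
      (\<forall>i\<in>{1..n+1}. y i = Inl i \<or> (\<exists>B\<in>P. i \<in> B \<and> y i = Inr B)) \<and> inj_on y {1..n+1} }"

definition K_faces :: "nat \<Rightarrow> nat set set \<Rightarrow> vtx set set" where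
  "K_faces n P = { F. F \<noteq> {} \<and> (\<exists>S\<in>K_facets n P. F \<subseteq> S) }"

definition complex_iso :: "'a set \<Rightarrow> 'a set set \<Rightarrow> 'b set \<Rightarrow> 'b set set \<Rightarrow> bool" where
  "complex_iso V K V' K' \<longleftrightarrow> (\<exists>\<phi>. bij_betw \<phi> V V' \<and> (\<lambda>F. \<phi> ` F) ` K = K')"

definition perm_group :: "'a set \<Rightarrow> ('a \<Rightarrow> 'a) monoid" where
  "perm_group V = \<lparr> carrier = {p. p permutes V}, monoid.mult = (\<circ>), one = id \<rparr>"

definition K_gens :: "nat \<Rightarrow> nat set set \<Rightarrow> (vtx \<Rightarrow> vtx) set" where
  "K_gens n P = { transpose (Inl i) (Inr B) | i B. i \<in> {1..n+1} \<and> B \<in> P \<and> i \<in> B }"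

definition Cox :: "nat \<Rightarrow> nat set set \<Rightarrow> (vtx \<Rightarrow> vtx) monoid" where
  "Cox n P = subgroup_generated (perm_group (KV n P)) (K_gens n P)"

end

theory Submission
  imports Defs
begin
abbreviation iv :: "('a \<Rightarrow> 'a) \<Rightarrow> 'a \<Rightarrow> 'a" where "iv f \<equiv> inv_into UNIV f"

definition fpf :: "('a \<Rightarrow> 'a) \<Rightarrow> 'a set \<Rightarrow> bool" where
  "fpf w Y \<longleftrightarrow> (\<forall>v\<in>Y. w v \<noteq> v)"

definition CC :: "'a set \<Rightarrow> ('a \<Rightarrow> 'a) \<Rightarrow> ('a \<Rightarrow> 'a) set" where
  "CC Y \<pi> = {w. w permutes Y \<and> (\<forall>h g. h permutes Y \<longrightarrow> g permutes Y \<longrightarrow> (\<forall>x. h (g x) = x) \<longrightarrow>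
       (\<forall>x. w (h (\<pi> (g x))) = h (\<pi> (g (w x)))))}"

lemma comm_inv:
  assumes "bij Q" "w \<circ> Q = Q \<circ> w"
  shows "w \<circ> iv Q = iv Q \<circ> w"
proof
  fix x
  have e1: "Q (iv Q y) = y" for y using assms(1) by (meson bij_inv_eq_iff)
  have "Q (w (iv Q x)) = w x" using fun_cong[OF assms(2), of "iv Q x"] e1 by simp
  moreover have "Q (iv Q (w x)) = w x" using e1 by simp
  ultimately show "(w \<circ> iv Q) x = (iv Q \<circ> w) x" using assms(1) by (simp add: bij_def) (metis injD)
qed

lemma L1:
  assumes pi: "\<pi> permutes Y" and f: "f \<in> Y" "\<pi> f = f" and s: "\<pi> s \<noteq> s"
    and w: "w permutes Y" "w a \<noteq> a"
    and comm: "\<And>h g x. h permutes Y \<Longrightarrow> g permutes Y \<Longrightarrow> (\<forall>x. h (g x) = x) \<Longrightarrow> w (h (\<pi> (g x))) = h (\<pi> (g (w x)))"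
  shows False
proof -
  have sY: "s \<in> Y" using pi s by (meson permutes_not_in)
  have aY: "a \<in> Y" using w by (meson permutes_not_in)
  define b where "b = w a"
  have bY: "b \<in> Y" using w aY b_def by (simp add: permutes_in_image)
  have ab: "a \<noteq> b" using w b_def by simp
  have fs: "f \<noteq> s" using f s by auto
  define g1 where "g1 = transpose a f"
  define g where "g = transpose b (g1 s) \<circ> g1"
  have g1s: "g1 s \<in> Y" using g1_def sY aY f by (auto simp: transpose_def)
  have g1f: "g1 f = a" by (simp add: g1_def)
  have g1sa: "g1 s \<noteq> a" using fs g1_def by (auto simp: transpose_def)
  have gf: "g f = a" using g1f g1sa ab by (simp add: g_def transpose_def)
  have gs: "g s = b" by (simp add: g_def)
  have gp: "g permutes Y" unfolding g_def g1_def
    using permutes_compose[OF permutes_swap_id[OF aY f(1)] permutes_swap_id[OF bY g1s[unfolded g1_def]]] .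
  have ig: "iv g a = f" using gf gp by (metis permutes_inverses(2))
  have igb: "iv g b = s" using gs gp by (metis permutes_inverses(2))
  have r1: "(g \<circ> \<pi> \<circ> iv g) a = a" using ig f gf by simp
  have r2: "(g \<circ> \<pi> \<circ> iv g) b \<noteq> b"
  proof
    assume "(g \<circ> \<pi> \<circ> iv g) b = b"
    then have "g (\<pi> s) = g s" using igb gs by simp
    then have "\<pi> s = s" using gp by (metis permutes_inverses(2))
    then show False using s by simp
  qed
  have "w (g (\<pi> (iv g a))) = g (\<pi> (iv g (w a)))"
    using comm[OF gp permutes_inv[OF gp]] gp by (meson permutes_inverses(1))
  then show False using r1 r2 b_def by simp
qed

lemma perm_inv_eq:
  assumes "h permutes Y" "\<forall>x. h (g x) = x"
  shows "g = iv h"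
proof
  fix x show "g x = iv h x" using assms by (metis permutes_inverses(2))
qed

lemma CC_comp: "w1 \<in> CC Y \<pi> \<Longrightarrow> w2 \<in> CC Y \<pi> \<Longrightarrow> w1 \<circ> w2 \<in> CC Y \<pi>"
  unfolding CC_def by (auto intro: permutes_compose)

lemma CC_id: "id \<in> CC Y \<pi>"
  unfolding CC_def by (auto simp: permutes_id)

lemma CC_normal:
  assumes w: "w \<in> CC Y \<pi>" and h: "h permutes Y"
  shows "h \<circ> w \<circ> iv h \<in> CC Y \<pi>"
proof -
  let ?g = "iv h"
  have gp: "?g permutes Y" using h by (rule permutes_inv)
  have hg: "h (?g x) = x" "?g (h x) = x" for x using h by (auto simp: permutes_inverses)
  have wp: "w permutes Y" using w by (simp add: CC_def)
  have "\<forall>x. (h \<circ> w \<circ> iv h) (h' (\<pi> (g' x))) = h' (\<pi> (g' ((h \<circ> w \<circ> iv h) x)))"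
    if h': "h' permutes Y" and g': "g' permutes Y" and hg': "\<forall>x. h' (g' x) = x" for h' g'
  proof
    fix x
    have c1: "(?g \<circ> h') ((g' \<circ> h) y) = y" for y using hg hg' by simp
    have "w ((?g \<circ> h') (\<pi> ((g' \<circ> h) p))) = (?g \<circ> h') (\<pi> ((g' \<circ> h) (w p)))" for p
      using w permutes_compose[OF h' gp] permutes_compose[OF h g'] c1 unfolding CC_def by blast
    from this[of "?g x"] have "w (?g (h' (\<pi> (g' x)))) = ?g (h' (\<pi> (g' (h (w (?g x))))))"
      using hg by simp
    then have "h (w (?g (h' (\<pi> (g' x))))) = h (?g (h' (\<pi> (g' (h (w (?g x)))))))" by simp
    then show "(h \<circ> w \<circ> iv h) (h' (\<pi> (g' x))) = h' (\<pi> (g' ((h \<circ> w \<circ> iv h) x)))"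
      using hg by simp
  qed
  moreover have "h \<circ> w \<circ> iv h permutes Y"
    using permutes_compose[OF gp permutes_compose[OF wp h]] by (simp add: comp_assoc)
  ultimately show ?thesis unfolding CC_def by blast
qed

lemma CC_comm_pi:
  assumes w: "w \<in> CC Y \<pi>"
  shows "w (\<pi> x) = \<pi> (w x)"
proof -
  have A: "\<forall>h g. h permutes Y \<longrightarrow> g permutes Y \<longrightarrow> (\<forall>x. h (g x) = x) \<longrightarrow>
       (\<forall>x. w (h (\<pi> (g x))) = h (\<pi> (g (w x))))" using w by (simp add: CC_def)
  show ?thesis using A[rule_format, of id id] by (simp add: permutes_id)
qed

lemma L3:
  assumes pi: "\<pi> permutes Y" "\<pi> s \<noteq> s" and w: "w \<in> CC Y \<pi>" "w a \<noteq> a"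
  shows "fpf w Y"
  unfolding fpf_def
proof (intro ballI notI)
  fix f assume fY: "f \<in> Y" and wf: "w f = f"
  have wp: "w permutes Y" using w by (simp add: CC_def)
  show False
  proof (rule L1[OF wp fY wf w(2) pi(1) pi(2)])
    fix h g x assume h: "h permutes Y" and g: "g permutes Y" and hg: "\<forall>x. h (g x) = x"
    have "g = iv h" using perm_inv_eq[OF h hg] .
    then have "h \<circ> w \<circ> g \<in> CC Y \<pi>" using CC_normal[OF w(1) h] by simp
    from CC_comm_pi[OF this] show "\<pi> (h (w (g x))) = h (w (g (\<pi> x)))" by simp
  qed
qed

lemma L4:
  assumes fin: "finite Y" and c5: "card Y \<ge> 5"
    and pi: "\<pi> permutes Y" "\<pi> s \<noteq> s" and w: "w \<in> CC Y \<pi>"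
  shows "w = id"
proof (rule ccontr)
  assume "w \<noteq> id"
  then obtain a where wa: "w a \<noteq> a" by (meson eq_id_iff)
  have wp: "w permutes Y" using w by (simp add: CC_def)
  have comm: "w (h (\<pi> (g x))) = h (\<pi> (g (w x)))"
    if "h permutes Y" "g permutes Y" "\<forall>x. h (g x) = x" for h g x
    using w that unfolding CC_def by blast
  show False
  proof (cases "\<exists>f\<in>Y. \<pi> f = f")
    case True
    then obtain f where "f \<in> Y" "\<pi> f = f" by blast
    from L1[OF pi(1) this pi(2) wp wa] comm show False by blast
  next
    case False
    then have fp: "\<And>v. v \<in> Y \<Longrightarrow> \<pi> v \<noteq> v" by blast
    have sY: "s \<in> Y" using pi by (meson permutes_not_in)
    define d where "d = s"
    have dY: "d \<in> Y" using sY d_def by simp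
    have pdY: "\<pi> d \<in> Y" using pi dY by (simp add: permutes_in_image)
    have "card (Y - {d, \<pi> d}) > 0"
    proof -
      have "card (Y - {d, \<pi> d}) \<ge> card Y - card {d, \<pi> d}" by (rule diff_card_le_card_Diff) simp
      moreover have "card {d, \<pi> d} \<le> 2" by (simp add: card_insert_le_m1)
      ultimately show ?thesis using c5 by linarith
    qed
    then obtain e0 where "e0 \<in> Y - {d, \<pi> d}" by (metis card_gt_0_iff ex_in_conv)
    then have e: "e0 \<in> Y" "e0 \<noteq> d" "e0 \<noteq> \<pi> d" by auto
    have peY: "\<pi> e0 \<in> Y" using pi e by (simp add: permutes_in_image)
    have "card (Y - {d, e0, \<pi> d, \<pi> e0}) > 0"
    proof -
      have "card (Y - {d, e0, \<pi> d, \<pi> e0}) \<ge> card Y - card {d, e0, \<pi> d, \<pi> e0}" by (rule diff_card_le_card_Diff) simp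
      moreover have "card {d, e0, \<pi> d, \<pi> e0} \<le> 4" by (simp add: card_insert_if)
      ultimately show ?thesis using c5 by linarith
    qed
    then obtain u0 where "u0 \<in> Y - {d, e0, \<pi> d, \<pi> e0}" by (metis card_gt_0_iff ex_in_conv)
    then have u: "u0 \<in> Y" "u0 \<noteq> d" "u0 \<noteq> e0" "u0 \<noteq> \<pi> d" "u0 \<noteq> \<pi> e0" by auto
    define \<tau> where "\<tau> = transpose d e0"
    define ip where "ip = iv \<pi>"
    have ipp: "ip (\<pi> x) = x" "\<pi> (ip x) = x" for x using pi ip_def by (auto simp: permutes_inverses)
    have ipY: "ip permutes Y" using pi ip_def by (simp add: permutes_inv)
    have tp: "\<tau> permutes Y" using \<tau>_def dY e(1) by (simp add: permutes_swap_id)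
    have tt: "\<tau> (\<tau> x) = x" for x by (simp add: \<tau>_def)
    define \<rho> where "\<rho> = \<pi> \<circ> \<tau> \<circ> ip \<circ> \<tau>"
    have rp: "\<rho> permutes Y" unfolding \<rho>_def
      by (intro permutes_compose tp ipY pi(1))
    have ipu: "ip u0 \<noteq> d" "ip u0 \<noteq> e0" using u ipp by metis+
    have ru: "\<rho> u0 = u0" using u ipu ipp by (simp add: \<rho>_def \<tau>_def transpose_def)
    have ipe: "ip e0 \<noteq> d" "ip e0 \<noteq> e0" using e ipp fp[OF e(1)] by metis+
    have rd: "\<rho> d \<noteq> d" using ipe ipp e by (simp add: \<rho>_def \<tau>_def transpose_def)
    show False
    proof (rule L1[OF rp u(1) ru rd wp wa])
      fix h g x assume h: "h permutes Y" and g: "g permutes Y" and hg: "\<forall>x. h (g x) = x"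
      have gh: "g (h x) = x" for x using perm_inv_eq[OF h hg] h by (simp add: permutes_inverses)
      define c3 where "c3 = h \<circ> \<tau> \<circ> \<pi> \<circ> \<tau> \<circ> g"
      define c2 where "c2 = h \<circ> \<tau> \<circ> ip \<circ> \<tau> \<circ> g"
      have w1: "w (h (\<pi> (g y))) = h (\<pi> (g (w y)))" for y using comm[OF h g hg] .
      have w3: "w (c3 y) = c3 (w y)" for y
        using comm[OF permutes_compose[OF tp h] permutes_compose[OF g tp], of y] hg tt
        by (simp add: c3_def)
      have c23: "c2 (c3 y) = y" "c3 (c2 y) = y" for y by (simp_all add: c2_def c3_def gh tt ipp hg)
      have w2: "w (c2 y) = c2 (w y)" for y
      proof -
        have "w (c3 (c2 y)) = c3 (w (c2 y))" by (rule w3)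
        then have "w y = c3 (w (c2 y))" by (simp add: c23)
        then have "c2 (w y) = c2 (c3 (w (c2 y)))" by simp
        then show ?thesis by (simp add: c23)
      qed
      have split: "h (\<rho> (g y)) = h (\<pi> (g (c2 y)))" for y
        by (simp add: \<rho>_def c2_def gh)
      show "w (h (\<rho> (g x))) = h (\<rho> (g (w x)))"
        using split w1 w2 by simp
    qed
  qed
qed

lemma card_4_obtain:
  assumes "card Y = 4"
  obtains a b c d where "Y = {a,b,c,d}" "a \<noteq> b" "a \<noteq> c" "a \<noteq> d" "b \<noteq> c" "b \<noteq> d" "c \<noteq> d"
proof -
  from assms have "card Y = Suc 3" by simp
  then obtain a B where "Y = insert a B" "a \<notin> B" "card B = 3" unfolding card_Suc_eq by blast
  moreover then obtain b c d where "B = {b,c,d}" "b \<noteq> c" "c \<noteq> d" "b \<noteq> d" by (auto simp: card_3_iff)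
  ultimately show ?thesis using that by auto
qed

lemma perm_facts:
  assumes "u permutes Y"
  shows "\<And>x. x \<notin> Y \<Longrightarrow> u x = x" "\<And>x. x \<in> Y \<Longrightarrow> u x \<in> Y" "\<And>x y. u x = u y \<longleftrightarrow> x = y"
  using assms by (auto simp: permutes_not_in permutes_in_image permutes_inj inj_eq)

lemma nf3:
  assumes "Y = {a,b,c}" "a \<noteq> b" "b \<noteq> c" "a \<noteq> c" "u permutes Y" "fpf u Y"
  shows "(u a = b \<and> u b = c \<and> u c = a) \<or> (u a = c \<and> u c = b \<and> u b = a)"
proof -
  note U = perm_facts[OF assms(5)]
  have f: "u a \<noteq> a" "u b \<noteq> b" "u c \<noteq> c" using assms(1,6) by (auto simp: fpf_def)
  have i: "u a \<in> {a,b,c}" "u b \<in> {a,b,c}" "u c \<in> {a,b,c}" using U(2) assms(1) by auto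
  have n: "u a \<noteq> u b" "u a \<noteq> u c" "u b \<noteq> u c" using U(3) assms(2,3,4) by auto
  show ?thesis using f i n by auto
qed

lemma nf4:
  assumes "Y = {a,b,c,d}" "a \<noteq> b" "a \<noteq> c" "a \<noteq> d" "b \<noteq> c" "b \<noteq> d" "c \<noteq> d"
    "u permutes Y" "fpf u Y" "\<And>x. u (u x) = x"
  shows "(u a = b \<and> u b = a \<and> u c = d \<and> u d = c) \<or> (u a = c \<and> u c = a \<and> u b = d \<and> u d = b)
       \<or> (u a = d \<and> u d = a \<and> u b = c \<and> u c = b)"
proof -
  note U = perm_facts[OF assms(8)]
  have f: "u a \<noteq> a" "u b \<noteq> b" "u c \<noteq> c" "u d \<noteq> d" using assms(1,9) by (auto simp: fpf_def)
  have i: "u a \<in> {a,b,c,d}" "u b \<in> {a,b,c,d}" "u c \<in> {a,b,c,d}" "u d \<in> {a,b,c,d}" using U(2) assms(1) by auto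
  have n: "u a \<noteq> u b" "u a \<noteq> u c" "u a \<noteq> u d" "u b \<noteq> u c" "u b \<noteq> u d" "u c \<noteq> u d"
    using U(3) assms(2-7) by auto
  have inv: "u (u a) = a" "u (u b) = b" "u (u c) = c" "u (u d) = d" using assms(10) by auto
  consider "u a = b" | "u a = c" | "u a = d" using i(1) f(1) by auto
  then show ?thesis
  proof cases
    case 1
    then have "u b = a" using inv by metis
    then show ?thesis using 1 f i n by auto
  next
    case 2
    then have "u c = a" using inv by metis
    then show ?thesis using 2 f i n by auto
  next
    case 3
    then have "u d = a" using inv by metis
    then show ?thesis using 3 f i n by auto
  qed
qed

lemma nf3_eq:
  assumes Y: "Y = {a,b,c}" "a \<noteq> b" "b \<noteq> c" "a \<noteq> c" and u: "u permutes Y" "fpf u Y"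
    and v: "v permutes Y" "fpf v Y" and e: "u a = v a"
  shows "\<forall>x\<in>Y. u x = v x"
proof -
  note nu = nf3[OF Y u] and nv = nf3[OF Y v]
  have "u a = v a \<and> u b = v b \<and> u c = v c"
    using nu nv e Y(2-4) by (elim disjE conjE) simp_all
  then show ?thesis using Y(1) by auto
qed

lemma nf4_eq:
  assumes Y: "Y = {a,b,c,d}" "a \<noteq> b" "a \<noteq> c" "a \<noteq> d" "b \<noteq> c" "b \<noteq> d" "c \<noteq> d"
    and u: "u permutes Y" "fpf u Y" "\<And>x. u (u x) = x"
    and v: "v permutes Y" "fpf v Y" "\<And>x. v (v x) = x" and e: "u a = v a"
  shows "\<forall>x\<in>Y. u x = v x"
proof -
  note nu = nf4[OF Y u] and nv = nf4[OF Y v]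
  have "u a = v a \<and> u b = v b \<and> u c = v c \<and> u d = v d"
    using nu nv e Y(2-7) by (elim disjE conjE) simp_all
  then show ?thesis using Y(1) by auto
qed

lemma L5:
  assumes "card Y = 3" "u permutes Y" "v permutes Y" "fpf u Y" "fpf v Y"
  shows "u \<circ> v = v \<circ> u"
proof
  fix x
  obtain a b c where Y: "Y = {a,b,c}" "a \<noteq> b" "b \<noteq> c" "a \<noteq> c" using assms(1) by (auto simp: card_3_iff)
  note U = perm_facts[OF assms(2)] and V = perm_facts[OF assms(3)]
  have nu: "(u a = b \<and> u b = c \<and> u c = a) \<or> (u a = c \<and> u c = b \<and> u b = a)" by (rule nf3[OF Y assms(2,4)])
  have nv: "(v a = b \<and> v b = c \<and> v c = a) \<or> (v a = c \<and> v c = b \<and> v b = a)" by (rule nf3[OF Y assms(3,5)])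
  show "(u \<circ> v) x = (v \<circ> u) x"
  proof (cases "x \<in> Y")
    case False then show ?thesis using U(1) V(1) by simp
  next
    case True
    then have "x = a \<or> x = b \<or> x = c" using Y by auto
    then show ?thesis using nu nv by auto
  qed
qed

lemma L6:
  assumes "card Y = 4" "u permutes Y" "v permutes Y" "fpf u Y" "fpf v Y"
    "\<And>x. u (u x) = x" "\<And>x. v (v x) = x"
  shows "u \<circ> v = v \<circ> u"
proof
  fix x
  obtain a b c d where Y: "Y = {a,b,c,d}" "a \<noteq> b" "a \<noteq> c" "a \<noteq> d" "b \<noteq> c" "b \<noteq> d" "c \<noteq> d"
    using card_4_obtain[OF assms(1)] by blast
  note U = perm_facts[OF assms(2)] and V = perm_facts[OF assms(3)]
  note nu = nf4[OF Y assms(2,4,6)] and nv = nf4[OF Y assms(3,5,7)]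
  show "(u \<circ> v) x = (v \<circ> u) x"
  proof (cases "x \<in> Y")
    case False then show ?thesis using U(1) V(1) by simp
  next
    case True
    then have "x = a \<or> x = b \<or> x = c \<or> x = d" using Y by auto
    then show ?thesis using nu nv by auto
  qed
qed

lemma transpose_iv: "a \<in> Y \<Longrightarrow> b \<in> Y \<Longrightarrow> iv (transpose a b) = transpose a b"
  by (rule perm_inv_eq[symmetric, OF permutes_swap_id]) auto

lemma L7:
  assumes fin: "finite Y" and c4: "card Y = 4"
    and pi: "\<pi> permutes Y" "\<pi> s \<noteq> s" and w: "w \<in> CC Y \<pi>"
  shows "w = id \<or> (fpf w Y \<and> (\<forall>x. w (w x) = x))"
proof (cases "w = id")
  case True then show ?thesis by simp
next
  case False
  then obtain a0 where wa0: "w a0 \<noteq> a0" by (meson eq_id_iff)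
  have fw: "fpf w Y" by (rule L3[OF pi w wa0])
  have wp: "w permutes Y" using w by (simp add: CC_def)
  note W = perm_facts[OF wp]
  have "\<forall>x. w (w x) = x"
  proof (rule ccontr)
    assume "\<not> (\<forall>x. w (w x) = x)"
    then obtain a where a: "w (w a) \<noteq> a" by blast
    have aY: "a \<in> Y" using a W(1) by metis
    define b where "b = w a"
    define c where "c = w b"
    have bY: "b \<in> Y" and cY: "c \<in> Y" using aY W(2) b_def c_def by auto
    have ab: "a \<noteq> b" using fw aY b_def by (auto simp: fpf_def)
    have bc: "b \<noteq> c" using fw bY c_def by (auto simp: fpf_def)
    have ac: "a \<noteq> c" using a b_def c_def by simp
    have wca: "w c \<noteq> a"
    proof
      assume wc: "w c = a"
      have "card (Y - {a,b,c}) > 0"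
      proof -
        have "card (Y - {a,b,c}) \<ge> card Y - card {a,b,c}" by (rule diff_card_le_card_Diff) simp
        moreover have "card {a,b,c} \<le> 3" by (simp add: card_insert_if)
        ultimately show ?thesis using c4 by linarith
      qed
      then obtain e where "e \<in> Y - {a,b,c}" by (metis card_gt_0_iff ex_in_conv)
      then have e: "e \<in> Y" "e \<noteq> a" "e \<noteq> b" "e \<noteq> c" by auto
      have "w e \<in> Y" using W(2) e(1) by simp
      moreover have "Y = {a,b,c,e}"
      proof -
        have "{a,b,c,e} \<subseteq> Y" using aY bY cY e(1) by auto
        moreover have "card {a,b,c,e} = 4" using ab bc ac e by auto
        ultimately show ?thesis using c4 fin by (metis card_subset_eq)
      qed
      moreover have "w e \<noteq> b" using e(2) b_def W(3) by metis
      moreover have "w e \<noteq> c" using e(3) c_def W(3) by metis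
      moreover have "w e \<noteq> a" using e(4) wc W(3) by metis
      moreover have "w e \<noteq> e" using fw e(1) by (auto simp: fpf_def)
      ultimately show False by auto
    qed
    define \<tau> where "\<tau> = transpose a b"
    have tp: "\<tau> permutes Y" using \<tau>_def aY bY by (simp add: permutes_swap_id)
    have "\<tau> \<circ> w \<circ> iv \<tau> \<in> CC Y \<pi>" by (rule CC_normal[OF w tp])
    then have w'CC: "\<tau> \<circ> w \<circ> \<tau> \<in> CC Y \<pi>" using transpose_iv[OF aY bY] \<tau>_def by simp
    have prod: "w \<circ> (\<tau> \<circ> w \<circ> \<tau>) \<in> CC Y \<pi>" by (rule CC_comp[OF w w'CC])
    have fix_b: "(w \<circ> (\<tau> \<circ> w \<circ> \<tau>)) b = b" using b_def ab by (simp add: \<tau>_def)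
    have mv_a: "(w \<circ> (\<tau> \<circ> w \<circ> \<tau>)) a \<noteq> a" using b_def c_def ab bc ac wca by (simp add: \<tau>_def)
    have "fpf (w \<circ> (\<tau> \<circ> w \<circ> \<tau>)) Y" by (rule L3[OF pi prod mv_a])
    then show False using fix_b bY by (auto simp: fpf_def)
  qed
  then show ?thesis using fw by simp
qed

definition SS :: "'a set \<Rightarrow> ('a \<Rightarrow> 'a) set" where
  "SS Y = {w. w permutes Y \<and> (w = id \<or> (card Y \<le> 4 \<and> fpf w Y \<and> (card Y = 4 \<longrightarrow> (\<forall>x. w (w x) = x))))}"

theorem CC_sub_SS:
  assumes fin: "finite Y" and c3: "card Y \<ge> 3"
    and pi: "\<pi> permutes Y" "\<pi> s \<noteq> s" and w: "w \<in> CC Y \<pi>"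
  shows "w \<in> SS Y"
proof -
  have wp: "w permutes Y" using w by (simp add: CC_def)
  consider "card Y = 3" | "card Y = 4" | "card Y \<ge> 5" using c3 by linarith
  then show ?thesis
  proof cases
    case 1
    show ?thesis
    proof (cases "w = id")
      case True then show ?thesis using wp by (simp add: SS_def)
    next
      case False
      then obtain a where "w a \<noteq> a" by (meson eq_id_iff)
      from L3[OF pi w this] show ?thesis using wp 1 by (simp add: SS_def)
    qed
  next
    case 2
    from L7[OF fin 2 pi w] show ?thesis using wp 2 by (auto simp: SS_def)
  next
    case 3
    from L4[OF fin 3 pi w] show ?thesis using wp by (simp add: SS_def)
  qed
qed

lemma conj_props:
  assumes h: "h permutes Y" and g: "g permutes Y" and hg: "\<forall>x. h (g x) = x" and p: "p permutes Y"
  shows "(h \<circ> p \<circ> g) permutes Y" "fpf p Y \<Longrightarrow> fpf (h \<circ> p \<circ> g) Y"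
    "(\<And>x. p (p x) = x) \<Longrightarrow> (\<And>x. (h \<circ> p \<circ> g) ((h \<circ> p \<circ> g) x) = x)"
proof -
  have gh: "g (h x) = x" for x using perm_inv_eq[OF h hg] h by (simp add: permutes_inverses)
  show "(h \<circ> p \<circ> g) permutes Y" by (intro permutes_compose h g p)
  show "fpf (h \<circ> p \<circ> g) Y" if "fpf p Y"
    unfolding fpf_def
  proof (intro ballI notI)
    fix v assume v: "v \<in> Y" "(h \<circ> p \<circ> g) v = v"
    then have "g (h (p (g v))) = g v" by simp
    then have "p (g v) = g v" using gh by simp
    moreover have "g v \<in> Y" using g v(1) by (simp add: permutes_in_image)
    ultimately show False using that by (auto simp: fpf_def)
  qed
  show "(h \<circ> p \<circ> g) ((h \<circ> p \<circ> g) x) = x" if "\<And>x. p (p x) = x" for x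
    using that gh hg by simp
qed

theorem SS_sub_CC:
  assumes fin: "finite Y" and c3: "card Y \<ge> 3"
  obtains \<pi>0 s where "\<pi>0 permutes Y" "\<pi>0 s \<noteq> s" "SS Y \<subseteq> CC Y \<pi>0" "card Y \<le> 4 \<Longrightarrow> \<pi>0 \<in> SS Y"
proof -
  consider "card Y = 3" | "card Y = 4" | "card Y \<ge> 5" using c3 by linarith
  then show ?thesis
  proof cases
    case 1
    then obtain a b c where Y: "Y = {a,b,c}" "a \<noteq> b" "b \<noteq> c" "a \<noteq> c" by (auto simp: card_3_iff)
    define p where "p = transpose a b \<circ> transpose b c"
    have pp: "p permutes Y" unfolding p_def using Y by (intro permutes_compose permutes_swap_id) auto
    have pf: "fpf p Y" using Y by (auto simp: fpf_def p_def transpose_def)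
    have pa: "p a \<noteq> a" using Y by (simp add: p_def transpose_def)
    have "SS Y \<subseteq> CC Y p"
    proof
      fix w assume "w \<in> SS Y"
      then have wp: "w permutes Y" and wf: "w = id \<or> fpf w Y" by (auto simp: SS_def)
      show "w \<in> CC Y p"
      proof (cases "w = id")
        case True then show ?thesis by (simp add: CC_id)
      next
        case False
        then have wf': "fpf w Y" using wf by simp
        have "\<forall>x. w (h (p (g x))) = h (p (g (w x)))"
          if h: "h permutes Y" and g: "g permutes Y" and hg: "\<forall>x. h (g x) = x" for h g
        proof -
          note cp = conj_props[OF h g hg pp]
          have "w \<circ> (h \<circ> p \<circ> g) = (h \<circ> p \<circ> g) \<circ> w" by (rule L5[OF 1 wp cp(1) wf' cp(2)[OF pf]])
          then show ?thesis by (metis comp_apply)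
        qed
        then show ?thesis using wp by (simp add: CC_def)
      qed
    qed
    moreover have "p \<in> SS Y" using pp pf 1 by (simp add: SS_def)
    ultimately show ?thesis using that pp pa by blast
  next
    case 2
    obtain a b c d where Y: "Y = {a,b,c,d}" "a \<noteq> b" "a \<noteq> c" "a \<noteq> d" "b \<noteq> c" "b \<noteq> d" "c \<noteq> d"
      using card_4_obtain[OF 2] by blast
    define p where "p = transpose a b \<circ> transpose c d"
    have pp: "p permutes Y" unfolding p_def using Y by (intro permutes_compose permutes_swap_id) auto
    have pf: "fpf p Y" using Y by (auto simp: fpf_def p_def transpose_def)
    have pi: "p (p x) = x" for x using Y by (simp add: p_def transpose_def)
    have pa: "p a \<noteq> a" using Y by (simp add: p_def transpose_def)
    have "SS Y \<subseteq> CC Y p"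
    proof
      fix w assume "w \<in> SS Y"
      then have wp: "w permutes Y" and wf: "w = id \<or> (fpf w Y \<and> (\<forall>x. w (w x) = x))"
        using 2 by (auto simp: SS_def)
      show "w \<in> CC Y p"
      proof (cases "w = id")
        case True then show ?thesis by (simp add: CC_id)
      next
        case False
        then have wf': "fpf w Y" "\<And>x. w (w x) = x" using wf by auto
        have "\<forall>x. w (h (p (g x))) = h (p (g (w x)))"
          if h: "h permutes Y" and g: "g permutes Y" and hg: "\<forall>x. h (g x) = x" for h g
        proof -
          note cp = conj_props[OF h g hg pp]
          have "w \<circ> (h \<circ> p \<circ> g) = (h \<circ> p \<circ> g) \<circ> w"
            by (rule L6[OF 2 wp cp(1) wf'(1) cp(2)[OF pf] wf'(2) cp(3)[OF pi]])
          then show ?thesis by (metis comp_apply)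
        qed
        then show ?thesis using wp by (simp add: CC_def)
      qed
    qed
    moreover have "p \<in> SS Y" using pp pf pi 2 by (simp add: SS_def)
    ultimately show ?thesis using that pp pa by blast
  next
    case 3
    then have "card Y > 1" by simp
    then obtain a where aY: "a \<in> Y" by (metis card.empty ex_in_conv not_less_zero)
    have "card (Y - {a}) > 0" using \<open>card Y > 1\<close> aY fin by simp
    then obtain b where "b \<in> Y - {a}" by (metis card_gt_0_iff ex_in_conv)
    then have ab: "a \<in> Y" "b \<in> Y" "a \<noteq> b" using aY by auto
    define p where "p = transpose a b"
    have pp: "p permutes Y" using ab by (simp add: p_def permutes_swap_id)
    have pa: "p a \<noteq> a" using ab by (simp add: p_def)
    have "SS Y = {id}" using 3 by (auto simp: SS_def permutes_id)
    then have "SS Y \<subseteq> CC Y p" by (simp add: CC_id)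
    then show ?thesis using that pp pa 3 by simp
  qed
qed

lemma SS_card:
  assumes fin: "finite Y" and c3: "card Y \<ge> 3"
  shows "finite (SS Y)" "card Y \<ge> 5 \<Longrightarrow> SS Y = {id}" "card Y \<le> 4 \<Longrightarrow> 2 \<le> card (SS Y)"
    "card Y \<le> 4 \<Longrightarrow> card (SS Y) \<le> card Y"
proof -
  show finS: "finite (SS Y)"
    by (rule finite_subset[OF _ finite_permutations[OF fin]]) (auto simp: SS_def)
  show "card Y \<ge> 5 \<Longrightarrow> SS Y = {id}" by (auto simp: SS_def permutes_id)
  show "2 \<le> card (SS Y)" if "card Y \<le> 4"
  proof -
    obtain p s where "p permutes Y" "p s \<noteq> s" "SS Y \<subseteq> CC Y p" "card Y \<le> 4 \<Longrightarrow> p \<in> SS Y"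
      using SS_sub_CC[OF fin c3] by metis
    then have "p \<in> SS Y" "p \<noteq> id" using that by auto
    moreover have "id \<in> SS Y" by (simp add: SS_def permutes_id)
    ultimately have "{id, p} \<subseteq> SS Y" by auto
    from card_mono[OF finS this] show ?thesis using \<open>p \<noteq> id\<close> by simp
  qed
  show "card (SS Y) \<le> card Y" if c4: "card Y \<le> 4"
  proof -
    obtain a where aY: "a \<in> Y" using c3 by (metis card.empty ex_in_conv not_numeral_le_zero)
    define F where "F = SS Y - {id}"
    have "inj_on (\<lambda>w. w a) F"
    proof (rule inj_onI)
      fix u v assume u: "u \<in> F" and v: "v \<in> F" and e: "u a = v a"
      have up: "u permutes Y" "fpf u Y" and vp: "v permutes Y" "fpf v Y"
        using u v c4 by (auto simp: F_def SS_def)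
      note U = perm_facts[OF up(1)] and V = perm_facts[OF vp(1)]
      show "u = v"
      proof
        fix x
        show "u x = v x"
        proof (cases "x \<in> Y")
          case False then show ?thesis using U(1) V(1) by simp
        next
          case True
          consider "card Y = 3" | "card Y = 4" using c3 c4 by linarith
          then show ?thesis
          proof cases
            case 1
            then obtain a' b c where Y0: "Y = {a',b,c}" "a' \<noteq> b" "b \<noteq> c" "a' \<noteq> c" by (auto simp: card_3_iff)
            then consider "a = a'" | "a = b" | "a = c" using aY by auto
            then show ?thesis
            proof cases
              case 1
              then have Y: "Y = {a,b,c}" "a \<noteq> b" "b \<noteq> c" "a \<noteq> c" using Y0 by auto
              show ?thesis using nf3_eq[OF Y up vp e] True by blast
            next
              case 2
              then have Y: "Y = {a,a',c}" "a \<noteq> a'" "a' \<noteq> c" "a \<noteq> c" using Y0 by auto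
              show ?thesis using nf3_eq[OF Y up vp e] True by blast
            next
              case 3
              then have Y: "Y = {a,a',b}" "a \<noteq> a'" "a' \<noteq> b" "a \<noteq> b" using Y0 by auto
              show ?thesis using nf3_eq[OF Y up vp e] True by blast
            qed
          next
            case 2
            have ui: "\<And>x. u (u x) = x" and vi: "\<And>x. v (v x) = x" using u v 2 by (auto simp: F_def SS_def)
            obtain a' b c d where Y0: "Y = {a',b,c,d}" "a' \<noteq> b" "a' \<noteq> c" "a' \<noteq> d" "b \<noteq> c" "b \<noteq> d" "c \<noteq> d"
              using card_4_obtain[OF 2] by blast
            then consider "a = a'" | "a = b" | "a = c" | "a = d" using aY by auto
            then show ?thesis
            proof cases
              case 1
              then have Y: "Y = {a,b,c,d}" "a \<noteq> b" "a \<noteq> c" "a \<noteq> d" "b \<noteq> c" "b \<noteq> d" "c \<noteq> d" using Y0 by auto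
              show ?thesis using nf4_eq[OF Y up ui vp vi e] True by blast
            next
              case 2
              then have Y: "Y = {a,a',c,d}" "a \<noteq> a'" "a \<noteq> c" "a \<noteq> d" "a' \<noteq> c" "a' \<noteq> d" "c \<noteq> d" using Y0 by auto
              show ?thesis using nf4_eq[OF Y up ui vp vi e] True by blast
            next
              case 3
              then have Y: "Y = {a,a',b,d}" "a \<noteq> a'" "a \<noteq> b" "a \<noteq> d" "a' \<noteq> b" "a' \<noteq> d" "b \<noteq> d" using Y0 by auto
              show ?thesis using nf4_eq[OF Y up ui vp vi e] True by blast
            next
              case 4
              then have Y: "Y = {a,a',b,c}" "a \<noteq> a'" "a \<noteq> b" "a \<noteq> c" "a' \<noteq> b" "a' \<noteq> c" "b \<noteq> c" using Y0 by auto
              show ?thesis using nf4_eq[OF Y up ui vp vi e] True by blast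
            qed
          qed
        qed
      qed
    qed
    moreover have "(\<lambda>w. w a) ` F \<subseteq> Y - {a}"
      using aY c4 by (auto simp: F_def SS_def fpf_def permutes_in_image)
    ultimately have "card F \<le> card (Y - {a})" using fin by (meson card_inj_on_le finite_Diff)
    then have "card F \<le> card Y - 1" using aY fin by simp
    moreover have "card (SS Y) \<le> card F + 1"
    proof -
      have fF: "finite F" using finS F_def by simp
      have "card (SS Y) \<le> card (insert id F)" using fF by (intro card_mono) (auto simp: F_def)
      also have "\<dots> \<le> card F + 1" using fF by (simp add: card_insert_if)
      finally show ?thesis .
    qed
    ultimately show ?thesis using c3 by linarith
  qed
qed

definition Yb :: "nat set \<Rightarrow> vtx set" where
  "Yb B = insert (Inr B) (Inl ` B)"

definition Gs :: "nat \<Rightarrow> nat set set \<Rightarrow> (vtx \<Rightarrow> vtx) set" where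
  "Gs n P = {p. p permutes KV n P \<and> (\<forall>B\<in>P. \<forall>v\<in>Yb B. p v \<in> Yb B)}"

definition rs :: "nat set \<Rightarrow> (vtx \<Rightarrow> vtx) \<Rightarrow> vtx \<Rightarrow> vtx" where
  "rs B p = (\<lambda>v. if v \<in> Yb B then p v else v)"

locale part =
  fixes n :: nat and P :: "nat set set"
  assumes part: "partition_on {1..n+1} P"
begin

lemma finP: "finite P"
  using part by (meson finite_atLeastAtMost finite_elements)

lemma blocks_sub: "B \<in> P \<Longrightarrow> B \<subseteq> {1..n+1}"
  using part by (auto simp: partition_on_def)

lemma finB: "B \<in> P \<Longrightarrow> finite B"
  using blocks_sub finite_subset by blast

lemma nonemptyB: "B \<in> P \<Longrightarrow> B \<noteq> {}"
  using part by (auto simp: partition_on_def)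

lemma disjB: "B \<in> P \<Longrightarrow> B' \<in> P \<Longrightarrow> i \<in> B \<Longrightarrow> i \<in> B' \<Longrightarrow> B = B'"
  using part unfolding partition_on_def disjoint_def by blast

lemma coverB: "i \<in> {1..n+1} \<Longrightarrow> \<exists>B\<in>P. i \<in> B"
  using part by (auto simp: partition_on_def)

lemma finKV: "finite (KV n P)"
  using finP by (simp add: KV_def)

lemma Yb_sub: "B \<in> P \<Longrightarrow> Yb B \<subseteq> KV n P"
  using blocks_sub by (auto simp: Yb_def KV_def)

lemma finYb: "B \<in> P \<Longrightarrow> finite (Yb B)"
  using finB by (simp add: Yb_def)

lemma cardYb: "B \<in> P \<Longrightarrow> card (Yb B) = card B + 1"
proof -
  assume B: "B \<in> P"
  have "Inr B \<notin> Inl ` B" by auto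
  then show ?thesis using finB[OF B] by (simp add: Yb_def card_image)
qed

lemma Yb_disj: "B \<in> P \<Longrightarrow> B' \<in> P \<Longrightarrow> v \<in> Yb B \<Longrightarrow> v \<in> Yb B' \<Longrightarrow> B = B'"
  unfolding Yb_def using disjB by auto

lemma KV_cover: "v \<in> KV n P \<Longrightarrow> \<exists>B\<in>P. v \<in> Yb B"
proof -
  assume "v \<in> KV n P"
  then consider i where "i \<in> {1..n+1}" "v = Inl i" | B where "B \<in> P" "v = Inr B" unfolding KV_def by blast
  then show ?thesis
  proof cases
    case 1
    then obtain B where "B \<in> P" "i \<in> B" using coverB by blast
    then show ?thesis using 1 by (auto simp: Yb_def)
  next
    case 2 then show ?thesis by (auto simp: Yb_def)
  qed
qed

lemma Gs_in: "p \<in> Gs n P \<Longrightarrow> B \<in> P \<Longrightarrow> v \<in> Yb B \<Longrightarrow> p v \<in> Yb B"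
  by (auto simp: Gs_def)

lemma Gs_out: "p \<in> Gs n P \<Longrightarrow> B \<in> P \<Longrightarrow> v \<notin> Yb B \<Longrightarrow> p v \<notin> Yb B"
proof -
  assume p: "p \<in> Gs n P" and B: "B \<in> P" and v: "v \<notin> Yb B"
  show "p v \<notin> Yb B"
  proof (cases "v \<in> KV n P")
    case True
    then obtain B' where B': "B' \<in> P" "v \<in> Yb B'" using KV_cover by blast
    then have "p v \<in> Yb B'" using Gs_in[OF p] by blast
    moreover have "B' \<noteq> B" using B' v by auto
    ultimately show ?thesis using Yb_disj[OF B B'(1)] by auto
  next
    case False
    then have "p v = v" using p by (auto simp: Gs_def permutes_not_in)
    then show ?thesis using v by simp
  qed
qed

lemma rs_permutes: "p \<in> Gs n P \<Longrightarrow> B \<in> P \<Longrightarrow> rs B p permutes Yb B"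
proof -
  assume p: "p \<in> Gs n P" and B: "B \<in> P"
  have pp: "p permutes KV n P" using p by (simp add: Gs_def)
  have "bij_betw (rs B p) (Yb B) (Yb B)"
  proof -
    have "inj_on p (Yb B)" using pp by (meson permutes_inj_on)
    then have "inj_on (rs B p) (Yb B)" by (auto simp: rs_def inj_on_def)
    moreover have "rs B p ` Yb B \<subseteq> Yb B" using Gs_in[OF p B] by (auto simp: rs_def)
    moreover have "rs B p ` Yb B = Yb B"
      using card_subset_eq[OF finYb[OF B] calculation(2)] card_image[OF calculation(1)] by simp
    ultimately show ?thesis by (simp add: bij_betw_def)
  qed
  moreover have "\<forall>x. x \<notin> Yb B \<longrightarrow> rs B p x = x" by (simp add: rs_def)
  ultimately show ?thesis by (meson bij_imp_permutes)
qed

lemma perm_Yb_Gs: "B \<in> P \<Longrightarrow> h permutes Yb B \<Longrightarrow> h \<in> Gs n P"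
proof -
  assume B: "B \<in> P" and h: "h permutes Yb B"
  have "h permutes KV n P" using h Yb_sub[OF B] by (rule permutes_subset)
  moreover have "\<forall>B'\<in>P. \<forall>v\<in>Yb B'. h v \<in> Yb B'"
  proof (intro ballI)
    fix B' v assume B': "B' \<in> P" and v: "v \<in> Yb B'"
    show "h v \<in> Yb B'"
    proof (cases "B' = B")
      case True then show ?thesis using h v by (simp add: permutes_in_image)
    next
      case False
      then have "v \<notin> Yb B" using Yb_disj[OF B B'] v by auto
      then show ?thesis using h v by (simp add: permutes_not_in)
    qed
  qed
  ultimately show ?thesis by (simp add: Gs_def)
qed

lemma Gs_id: "id \<in> Gs n P"
  by (simp add: Gs_def permutes_id)

lemma Gs_comp: "p \<in> Gs n P \<Longrightarrow> q \<in> Gs n P \<Longrightarrow> p \<circ> q \<in> Gs n P"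
  by (auto simp: Gs_def permutes_compose)

lemma Gs_ext:
  assumes p: "p \<in> Gs n P" and q: "q \<in> Gs n P" and e: "\<And>B. B \<in> P \<Longrightarrow> rs B p = rs B q"
  shows "p = q"
proof
  fix v
  show "p v = q v"
  proof (cases "v \<in> KV n P")
    case True
    then obtain B where B: "B \<in> P" "v \<in> Yb B" using KV_cover by blast
    from fun_cong[OF e[OF B(1)], of v] show ?thesis using B by (simp add: rs_def)
  next
    case False
    then show ?thesis using p q by (auto simp: Gs_def permutes_not_in)
  qed
qed


definition blk :: "vtx \<Rightarrow> nat set" where
  "blk v = (SOME B. B \<in> P \<and> v \<in> Yb B)"

lemma blk_eq: "B \<in> P \<Longrightarrow> v \<in> Yb B \<Longrightarrow> blk v = B"
proof -
  assume B: "B \<in> P" "v \<in> Yb B"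
  show ?thesis unfolding blk_def
  proof (rule some_equality)
    show "B \<in> P \<and> v \<in> Yb B" using B by simp
    fix B' assume "B' \<in> P \<and> v \<in> Yb B'"
    then show "B' = B" using Yb_disj B by blast
  qed
qed

definition glue :: "(nat set \<Rightarrow> vtx \<Rightarrow> vtx) \<Rightarrow> vtx \<Rightarrow> vtx" where
  "glue f v = (if v \<in> KV n P then f (blk v) v else v)"

lemma glue_Gs:
  assumes f: "\<And>B. B \<in> P \<Longrightarrow> f B permutes Yb B"
  shows "glue f \<in> Gs n P" "\<And>B. B \<in> P \<Longrightarrow> rs B (glue f) = f B"
proof -
  have gY: "glue f v = f B v" if "B \<in> P" "v \<in> Yb B" for B v
    using that Yb_sub blk_eq by (auto simp: glue_def)
  have gi: "glue f v \<in> Yb B" if "B \<in> P" "v \<in> Yb B" for B v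
    using gY[OF that] f[OF that(1)] that(2) by (simp add: permutes_in_image)
  have inj: "inj_on (glue f) (KV n P)"
  proof (rule inj_onI)
    fix v1 v2 assume v1: "v1 \<in> KV n P" and v2: "v2 \<in> KV n P" and e: "glue f v1 = glue f v2"
    obtain B1 where B1: "B1 \<in> P" "v1 \<in> Yb B1" using KV_cover v1 by blast
    obtain B2 where B2: "B2 \<in> P" "v2 \<in> Yb B2" using KV_cover v2 by blast
    have "B1 = B2" using gi[OF B1] gi[OF B2] e Yb_disj[OF B1(1) B2(1)] by simp
    then show "v1 = v2" using e gY[OF B1] gY[OF B2] f[OF B1(1)] by (metis permutes_inj injD)
  qed
  have img: "glue f ` KV n P = KV n P"
  proof
    show "glue f ` KV n P \<subseteq> KV n P" using gi Yb_sub KV_cover by blast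
    show "KV n P \<subseteq> glue f ` KV n P"
    proof
      fix u assume u: "u \<in> KV n P"
      obtain B where B: "B \<in> P" "u \<in> Yb B" using KV_cover u by blast
      then obtain v where "v \<in> Yb B" "f B v = u" using f[OF B(1)]
        by (metis permutes_image image_iff)
      then show "u \<in> glue f ` KV n P" using gY[OF B(1)] Yb_sub[OF B(1)] by (metis image_eqI subsetD)
    qed
  qed
  have bb: "bij_betw (glue f) (KV n P) (KV n P)" by (simp add: bij_betw_def inj img)
  have "glue f permutes KV n P"
    by (rule bij_imp_permutes[OF bb]) (simp add: glue_def)
  then show "glue f \<in> Gs n P" using gi by (simp add: Gs_def)
  show "rs B (glue f) = f B" if B: "B \<in> P" for B
  proof
    fix v show "rs B (glue f) v = f B v"
      using gY[OF B] f[OF B] by (auto simp: rs_def permutes_not_in)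
  qed
qed

lemma card_Gs_sub:
  assumes T: "\<And>B. B \<in> P \<Longrightarrow> T B \<subseteq> {p. p permutes Yb B}"
  shows "card {p \<in> Gs n P. \<forall>B\<in>P. rs B p \<in> T B} = (\<Prod>B\<in>P. card (T B))"
proof -
  let ?A = "{p \<in> Gs n P. \<forall>B\<in>P. rs B p \<in> T B}"
  let ?m = "\<lambda>p. restrict (\<lambda>B. rs B p) P"
  have "bij_betw ?m ?A (PiE P T)"
  proof (rule bij_betwI')
    fix p q assume pA: "p \<in> ?A" and qA: "q \<in> ?A"
    show "(?m p = ?m q) = (p = q)"
    proof
      assume e: "?m p = ?m q"
      have "rs B p = rs B q" if "B \<in> P" for B using fun_cong[OF e, of B] that by simp
      then show "p = q" using Gs_ext pA qA by blast
    qed simp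
  next
    fix p assume "p \<in> ?A" then show "?m p \<in> PiE P T" by (auto simp: PiE_def Pi_def)
  next
    fix f assume f: "f \<in> PiE P T"
    then have fp: "\<And>B. B \<in> P \<Longrightarrow> f B permutes Yb B" using T by (auto simp: PiE_def Pi_def)
    note gl = glue_Gs[OF fp]
    have "glue f \<in> ?A" using gl f by (auto simp: PiE_def Pi_def)
    moreover have "?m (glue f) = f"
    proof
      fix B show "?m (glue f) B = f B"
        using gl(2) f by (auto simp: PiE_def extensional_def)
    qed
    ultimately show "\<exists>p\<in>?A. f = ?m p" by (intro bexI[of _ "glue f"]) simp_all
  qed
  then have "card ?A = card (PiE P T)" by (rule bij_betw_same_card)
  also have "\<dots> = (\<Prod>B\<in>P. card (T B))" using finP by (rule card_PiE)
  finally show ?thesis .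
qed

lemma card_Gs: "card (Gs n P) = (\<Prod>B\<in>P. fact (card B + 1))"
proof -
  have "Gs n P = {p \<in> Gs n P. \<forall>B\<in>P. rs B p \<in> {q. q permutes Yb B}}" using rs_permutes by auto
  then have "card (Gs n P) = (\<Prod>B\<in>P. card {q. q permutes Yb B})"
    using card_Gs_sub[of "\<lambda>B. {q. q permutes Yb B}"] by simp
  also have "\<dots> = (\<Prod>B\<in>P. fact (card B + 1))"
    by (rule prod.cong) (auto simp: card_permutations finYb cardYb)
  finally show ?thesis .
qed

end

context part begin

lemma KV_Yb_gen:
  assumes B: "B \<in> P" and i: "i \<in> B"
  shows "transpose (Inl i) (Inr B) \<in> carrier (perm_group (KV n P)) \<inter> K_gens n P"
proof -
  have "Inl i \<in> Yb B" "Inr B \<in> Yb B" using i by (auto simp: Yb_def)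
  then have "transpose (Inl i) (Inr B) permutes KV n P"
    using Yb_sub[OF B] by (meson permutes_swap_id subsetD)
  moreover have "i \<in> {1..n+1}" using blocks_sub[OF B] i by auto
  ultimately show ?thesis using B i by (auto simp: perm_group_def K_gens_def)
qed

lemma gens_sub: "K_gens n P \<subseteq> Gs n P"
proof
  fix t assume "t \<in> K_gens n P"
  then obtain i B where t: "t = transpose (Inl i) (Inr B)" "B \<in> P" "i \<in> B" by (auto simp: K_gens_def)
  have "Inl i \<in> Yb B" "Inr B \<in> Yb B" using t by (auto simp: Yb_def)
  then have "t permutes Yb B" using t(1) by (simp add: permutes_swap_id)
  then show "t \<in> Gs n P" using perm_Yb_Gs[OF t(2)] by simp
qed

lemma perm_group_inv:
  assumes "t permutes V" "\<And>x. t (t x) = x"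
  shows "inv\<^bsub>perm_group V\<^esub> t = t"
proof -
  have "(THE y. y permutes V \<and> t \<circ> y = id \<and> y \<circ> t = id) = t"
  proof (rule the_equality)
    show "t permutes V \<and> t \<circ> t = id \<and> t \<circ> t = id" using assms by (auto simp: fun_eq_iff)
    fix y assume y: "y permutes V \<and> t \<circ> y = id \<and> y \<circ> t = id"
    have "y = y \<circ> (t \<circ> t)" using assms by (auto simp: fun_eq_iff)
    also have "\<dots> = t" using y by (simp add: comp_assoc[symmetric])
    finally show "y = t" .
  qed
  then show ?thesis by (simp add: m_inv_def perm_group_def)
qed

lemma gen_sub_Gs: "generate (perm_group (KV n P)) (carrier (perm_group (KV n P)) \<inter> K_gens n P) \<subseteq> Gs n P"
proof
  fix p assume "p \<in> generate (perm_group (KV n P)) (carrier (perm_group (KV n P)) \<inter> K_gens n P)"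
  then show "p \<in> Gs n P"
  proof induction
    case one then show ?case using Gs_id by (simp add: perm_group_def id_def)
  next
    case (incl h) then show ?case using gens_sub by auto
  next
    case (inv h)
    then obtain i B where t: "h = transpose (Inl i) (Inr B)" "B \<in> P" "i \<in> B" by (auto simp: K_gens_def)
    have "h permutes KV n P" using inv by (simp add: perm_group_def)
    then have "inv\<^bsub>perm_group (KV n P)\<^esub> h = h" using t(1) by (intro perm_group_inv) auto
    then show ?case using inv gens_sub by auto
  next
    case (eng h1 h2)
    have "h1 \<otimes>\<^bsub>perm_group (KV n P)\<^esub> h2 = h1 \<circ> h2" by (simp add: perm_group_def)
    then show ?case using Gs_comp[OF eng.IH] by (simp only:)
  qed
qed

abbreviation "GEN \<equiv> generate (perm_group (KV n P)) (carrier (perm_group (KV n P)) \<inter> K_gens n P)"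

lemma GEN_comp: "a \<in> GEN \<Longrightarrow> b \<in> GEN \<Longrightarrow> a \<circ> b \<in> GEN"
  using generate.eng[of a "perm_group (KV n P)" _ b] by (simp add: perm_group_def)

lemma GEN_id: "id \<in> GEN"
  using generate.one[of "perm_group (KV n P)"] by (simp add: perm_group_def)

lemma transp_GEN:
  assumes B: "B \<in> P" and a: "a \<in> Yb B" and b: "b \<in> Yb B"
  shows "transpose a b \<in> GEN"
proof -
  have g: "transpose (Inl i) (Inr B) \<in> GEN" if "i \<in> B" for i
    using generate.incl[OF KV_Yb_gen[OF B that]] .
  consider "a = b" | "a \<noteq> b" "a = Inr B" | "a \<noteq> b" "b = Inr B" | i j where "a = Inl i" "b = Inl j" "i \<noteq> j" "i \<in> B" "j \<in> B"
    using a b by (auto simp: Yb_def)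
  then show ?thesis
  proof cases
    case 1 then show ?thesis using GEN_id by simp
  next
    case 2
    then obtain i where "b = Inl i" "i \<in> B" using b by (auto simp: Yb_def)
    then show ?thesis using g 2 by (simp add: transpose_commute)
  next
    case 3
    then obtain i where "a = Inl i" "i \<in> B" using a by (auto simp: Yb_def)
    then show ?thesis using g 3 by simp
  next
    case 4
    have "transpose a b = transpose (Inl i) (Inr B) \<circ> transpose (Inl j) (Inr B) \<circ> transpose (Inl i) (Inr B)"
      using 4 by (auto simp: fun_eq_iff transpose_def)
    then show ?thesis using g[OF 4(4)] g[OF 4(5)] GEN_comp by simp
  qed
qed

lemma Gs_sub_gen: "p \<in> Gs n P \<Longrightarrow> p \<in> GEN"
proof (induction "card {v. p v \<noteq> v}" arbitrary: p rule: less_induct)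
  case less
  show ?case
  proof (cases "p = id")
    case True then show ?thesis using GEN_id by simp
  next
    case False
    then obtain v where v: "p v \<noteq> v" by (meson eq_id_iff)
    have pp: "p permutes KV n P" using less.prems by (simp add: Gs_def)
    have vK: "v \<in> KV n P" using v pp by (meson permutes_not_in)
    obtain B where B: "B \<in> P" "v \<in> Yb B" using KV_cover vK by blast
    define w where "w = p v"
    have wB: "w \<in> Yb B" using Gs_in[OF less.prems B] w_def by simp
    define t where "t = transpose v w"
    have tG: "t \<in> Gs n P" using perm_Yb_Gs[OF B(1)] permutes_swap_id[OF B(2) wB] t_def by simp
    define p' where "p' = t \<circ> p"
    have p'G: "p' \<in> Gs n P" using Gs_comp[OF tG less.prems] p'_def by simp
    have finS: "finite {v. p v \<noteq> v}"
      using finKV pp by (metis (mono_tags, lifting) finite_subset mem_Collect_eq permutes_not_in subsetI)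
    have sub: "{u. p' u \<noteq> u} \<subseteq> {u. p u \<noteq> u} - {v}"
    proof
      fix u assume u: "u \<in> {u. p' u \<noteq> u}"
      have "p u \<noteq> u"
      proof
        assume pu: "p u = u"
        then have "u \<noteq> v" using v by auto
        moreover have "u \<noteq> w" using pu v w_def pp by (metis permutes_inj injD)
        ultimately show False using u pu by (simp add: p'_def t_def transpose_def)
      qed
      moreover have "u \<noteq> v" using u w_def by (auto simp: p'_def t_def)
      ultimately show "u \<in> {u. p u \<noteq> u} - {v}" by simp
    qed
    have "card {u. p' u \<noteq> u} < card {v. p v \<noteq> v}"
    proof -
      have "card {u. p' u \<noteq> u} \<le> card ({u. p u \<noteq> u} - {v})" using sub finS by (intro card_mono) auto
      also have "\<dots> < card {v. p v \<noteq> v}" using finS v by (intro card_Diff1_less) auto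
      finally show ?thesis .
    qed
    then have "p' \<in> GEN" using less.hyps p'G by blast
    moreover have "t \<in> GEN" using transp_GEN[OF B wB] t_def by simp
    moreover have "p = t \<circ> p'" by (simp add: p'_def t_def fun_eq_iff)
    ultimately show ?thesis using GEN_comp by simp
  qed
qed

lemma Cox_carrier: "carrier (Cox n P) = Gs n P"
  unfolding Cox_def carrier_subgroup_generated using gen_sub_Gs Gs_sub_gen by blast

lemma Cox_mult: "monoid.mult (Cox n P) = (\<circ>)"
  by (simp add: Cox_def subgroup_generated_def perm_group_def)

end

definition Dp :: "('a \<Rightarrow> 'a) set \<Rightarrow> ('a \<Rightarrow> 'a) \<Rightarrow> ('a \<Rightarrow> 'a) set" where
  "Dp S x = {z \<in> S. \<forall>g\<in>S. \<forall>h\<in>S. g \<circ> h = id \<longrightarrow> z \<circ> (g \<circ> x \<circ> h) = (g \<circ> x \<circ> h) \<circ> z}"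

lemma two_comm:
  assumes "a \<noteq> b" "p a \<in> {a,b}" "p b \<in> {a,b}" "p a \<noteq> p b" "q a \<in> {a,b}" "q b \<in> {a,b}" "q a \<noteq> q b"
    "v \<in> {a,b}"
  shows "p (q v) = q (p v)"
  using assms by auto

context part begin

definition EB :: "nat set \<Rightarrow> (vtx \<Rightarrow> vtx) set" where
  "EB B = {z \<in> Gs n P. rs B z \<in> SS (Yb B)}"

lemma rs_in: "v \<in> Yb B \<Longrightarrow> rs B p v = p v" and rs_out: "v \<notin> Yb B \<Longrightarrow> rs B p v = v"
  by (auto simp: rs_def)

lemma K2:
  assumes x: "x \<in> Gs n P" and B: "B \<in> P" and c2: "card B \<ge> 2" and nx: "rs B x \<noteq> id"
  shows "Dp (Gs n P) x \<subseteq> EB B"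
proof
  fix z assume z: "z \<in> Dp (Gs n P) x"
  have zG: "z \<in> Gs n P" using z by (simp add: Dp_def)
  let ?Y = "Yb B"
  let ?w = "rs B z" and ?\<pi> = "rs B x"
  have wp: "?w permutes ?Y" by (rule rs_permutes[OF zG B])
  have pp: "?\<pi> permutes ?Y" by (rule rs_permutes[OF x B])
  obtain s where s: "?\<pi> s \<noteq> s" using nx by (meson eq_id_iff)
  have "?w \<in> CC ?Y ?\<pi>"
    unfolding CC_def
  proof (intro CollectI conjI allI impI wp)
    fix h g v assume h: "h permutes ?Y" and g: "g permutes ?Y" and hg: "\<forall>x. h (g x) = x"
    have hG: "h \<in> Gs n P" and gG: "g \<in> Gs n P" using perm_Yb_Gs[OF B] h g by auto
    have "h \<circ> g = id" using hg by (simp add: fun_eq_iff)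
    then have "z \<circ> (h \<circ> x \<circ> g) = (h \<circ> x \<circ> g) \<circ> z" using z hG gG by (simp add: Dp_def)
    then have cm: "z (h (x (g u))) = h (x (g (z u)))" for u by (metis comp_apply)
    show "?w (h (?\<pi> (g v))) = h (?\<pi> (g (?w v)))"
    proof (cases "v \<in> ?Y")
      case True
      have gv: "g v \<in> ?Y" using g True by (simp add: permutes_in_image)
      have xg: "x (g v) \<in> ?Y" using Gs_in[OF x B gv] .
      have hx: "h (x (g v)) \<in> ?Y" using h xg by (simp add: permutes_in_image)
      have zv: "z v \<in> ?Y" using Gs_in[OF zG B True] .
      have gz: "g (z v) \<in> ?Y" using g zv by (simp add: permutes_in_image)
      show ?thesis using cm[of v] True gv xg hx zv gz by (simp add: rs_in)
    next
      case False
      then show ?thesis using g h by (simp add: rs_out permutes_not_in)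
    qed
  qed
  then have "?w \<in> SS ?Y"
    using CC_sub_SS[OF finYb[OF B] _ pp s] cardYb[OF B] c2 by simp
  then show "z \<in> EB B" using zG by (simp add: EB_def)
qed

lemma K1:
  assumes B: "B \<in> P" and c2: "card B \<ge> 2"
  obtains x where "x \<in> Gs n P" "rs B x \<noteq> id" "Dp (Gs n P) x = EB B"
proof -
  let ?Y = "Yb B"
  have c3: "card ?Y \<ge> 3" using cardYb[OF B] c2 by simp
  obtain p s where p: "p permutes ?Y" "p s \<noteq> s" "SS ?Y \<subseteq> CC ?Y p"
    using SS_sub_CC[OF finYb[OF B] c3] by metis
  have pG: "p \<in> Gs n P" using perm_Yb_Gs[OF B p(1)] .
  have rsp: "rs B p = p" using p(1) by (auto simp: rs_def fun_eq_iff permutes_not_in)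
  then have nid: "rs B p \<noteq> id" using p(2) by auto
  have "EB B \<subseteq> Dp (Gs n P) p"
  proof
    fix z assume z: "z \<in> EB B"
    have zG: "z \<in> Gs n P" and wS: "rs B z \<in> SS ?Y" using z by (auto simp: EB_def)
    have wC: "rs B z \<in> CC ?Y p" using wS p(3) by blast
    have "z \<circ> (g \<circ> p \<circ> h) = (g \<circ> p \<circ> h) \<circ> z" if gG: "g \<in> Gs n P" and hG: "h \<in> Gs n P" and gh: "g \<circ> h = id" for g h
    proof
      fix v
      have gh': "g (h u) = u" for u using gh by (metis comp_apply id_apply)
      have g'p: "rs B g permutes ?Y" and h'p: "rs B h permutes ?Y" using rs_permutes gG hG B by auto
      have g'h': "\<forall>u. rs B g (rs B h u) = u"
      proof
        fix u show "rs B g (rs B h u) = u"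
          using Gs_in[OF hG B, of u] gh' by (cases "u \<in> ?Y") (auto simp: rs_def)
      qed
      have cc: "rs B z (rs B g (p (rs B h u))) = rs B g (p (rs B h (rs B z u)))" for u
        using wC g'p h'p g'h' unfolding CC_def by blast
      show "(z \<circ> (g \<circ> p \<circ> h)) v = ((g \<circ> p \<circ> h) \<circ> z) v"
      proof (cases "v \<in> ?Y")
        case True
        have hv: "h v \<in> ?Y" using Gs_in[OF hG B True] .
        have phv: "p (h v) \<in> ?Y" using p(1) hv by (simp add: permutes_in_image)
        have gphv: "g (p (h v)) \<in> ?Y" using Gs_in[OF gG B phv] .
        have zv: "z v \<in> ?Y" using Gs_in[OF zG B True] .
        have hzv: "h (z v) \<in> ?Y" using Gs_in[OF hG B zv] .
        have phzv: "p (h (z v)) \<in> ?Y" using p(1) hzv by (simp add: permutes_in_image)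
        show ?thesis using cc[of v] True hv phv gphv zv hzv phzv by (simp add: rs_in)
      next
        case False
        have hv: "h v \<notin> ?Y" using Gs_out[OF hG B False] .
        have zv: "z v \<notin> ?Y" using Gs_out[OF zG B False] .
        have hzv: "h (z v) \<notin> ?Y" using Gs_out[OF hG B zv] .
        show ?thesis using hv hzv p(1) gh' by (simp add: permutes_not_in)
      qed
    qed
    then show "z \<in> Dp (Gs n P) p" using zG by (simp add: Dp_def)
  qed
  moreover have "Dp (Gs n P) p \<subseteq> EB B" by (rule K2[OF pG B c2 nid])
  ultimately show ?thesis using that pG nid by blast
qed

lemma K3:
  assumes x: "x \<in> Gs n P" and nD: "Dp (Gs n P) x \<noteq> Gs n P"
  shows "\<exists>B\<in>P. card B \<ge> 2 \<and> rs B x \<noteq> id"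
proof (rule ccontr)
  assume "\<not> ?thesis"
  then have triv: "\<And>B. B \<in> P \<Longrightarrow> card B \<ge> 2 \<Longrightarrow> rs B x = id" by blast
  have "Gs n P \<subseteq> Dp (Gs n P) x"
  proof
    fix z assume zG: "z \<in> Gs n P"
    have "z \<circ> (g \<circ> x \<circ> h) = (g \<circ> x \<circ> h) \<circ> z" if gG: "g \<in> Gs n P" and hG: "h \<in> Gs n P" and gh: "g \<circ> h = id" for g h
    proof
      fix v
      have gh': "g (h u) = u" for u using gh by (metis comp_apply id_apply)
      show "(z \<circ> (g \<circ> x \<circ> h)) v = ((g \<circ> x \<circ> h) \<circ> z) v"
      proof (cases "v \<in> KV n P")
        case False
        then have "z v = v" "h v = v" "x v = v" "g v = v" using zG hG x gG by (auto simp: Gs_def permutes_not_in)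
        then show ?thesis by simp
      next
        case True
        then obtain B where B: "B \<in> P" "v \<in> Yb B" using KV_cover by blast
        show ?thesis
        proof (cases "card B \<ge> 2")
          case True
          have xid: "x u = u" if "u \<in> Yb B" for u using fun_cong[OF triv[OF B(1) True], of u] that by (simp add: rs_def)
          have hv: "h v \<in> Yb B" using Gs_in[OF hG B] .
          have zv: "z v \<in> Yb B" using Gs_in[OF zG B] .
          have hzv: "h (z v) \<in> Yb B" using Gs_in[OF hG B(1) zv] .
          show ?thesis using xid[OF hv] xid[OF hzv] gh' by simp
        next
          case False
          have "card B \<noteq> 0" using nonemptyB[OF B(1)] finB[OF B(1)] by simp
          then have "card B = 1" using False by linarith
          then obtain i where Bi: "B = {i}" by (meson card_1_singletonE)
          have Y2: "Yb B = {Inr B, Inl i}" using Bi by (simp add: Yb_def)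
          have ne: "Inr B \<noteq> Inl i" by simp
          define c where "c = g \<circ> x \<circ> h"
          have cG: "c \<in> Gs n P" using Gs_comp[OF Gs_comp[OF gG x] hG] c_def by simp
          have inj: "f a \<noteq> f b" if "f \<in> Gs n P" "a \<noteq> b" for f a b
            using that by (metis (no_types, lifting) Gs_def mem_Collect_eq permutes_inj injD)
          have "z (c v) = c (z v)"
            by (rule two_comm[OF ne _ _ inj[OF zG ne] _ _ inj[OF cG ne]])
               (use Gs_in[OF zG B(1)] Gs_in[OF cG B(1)] Y2 B(2) in auto)
          then show ?thesis by (simp add: c_def)
        qed
      qed
    qed
    then show "z \<in> Dp (Gs n P) x" using zG by (simp add: Dp_def)
  qed
  moreover have "Dp (Gs n P) x \<subseteq> Gs n P" by (auto simp: Dp_def)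
  ultimately show False using nD by blast
qed

lemma transp_block:
  assumes B: "B \<in> P" and c2: "card B \<ge> 2"
  obtains t where "t \<in> Gs n P" "t \<notin> EB B" "\<And>B'. B' \<in> P \<Longrightarrow> B' \<noteq> B \<Longrightarrow> t \<in> EB B'"
proof -
  obtain i where i: "i \<in> B" using nonemptyB[OF B] by blast
  have "card (B - {i}) > 0" using c2 i finB[OF B] by simp
  then obtain j where j: "j \<in> B" "j \<noteq> i" by (metis card_gt_0_iff ex_in_conv Diff_iff insertCI)
  define t where "t = transpose (Inr B) (Inl i)"
  have tp: "t permutes Yb B" using i by (simp add: t_def Yb_def permutes_swap_id)
  have tG: "t \<in> Gs n P" using perm_Yb_Gs[OF B tp] .
  have rst: "rs B t = t" using tp by (auto simp: rs_def fun_eq_iff permutes_not_in)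
  have "t \<noteq> id" by (simp add: t_def fun_eq_iff) (metis Inl_Inr_False transpose_apply_first)
  moreover have "\<not> fpf t (Yb B)"
  proof -
    have "t (Inl j) = Inl j" using j by (simp add: t_def transpose_def)
    moreover have "Inl j \<in> Yb B" using j by (simp add: Yb_def)
    ultimately show ?thesis by (auto simp: fpf_def)
  qed
  ultimately have "t \<notin> SS (Yb B)" by (auto simp: SS_def)
  then have "t \<notin> EB B" using rst by (simp add: EB_def)
  moreover have "t \<in> EB B'" if B': "B' \<in> P" "B' \<noteq> B" for B'
  proof -
    have "rs B' t = id"
    proof
      fix v show "rs B' t v = id v"
      proof (cases "v \<in> Yb B'")
        case True
        then have "v \<notin> Yb B" using Yb_disj[OF B B'(1)] B'(2) by auto
        then show ?thesis using True tp by (simp add: rs_def permutes_not_in)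
      qed (simp add: rs_def)
    qed
    then show ?thesis using tG by (simp add: EB_def SS_def permutes_id)
  qed
  ultimately show ?thesis using that tG by blast
qed

lemma K4a: "B \<in> P \<Longrightarrow> card B \<ge> 2 \<Longrightarrow> EB B \<noteq> Gs n P"
  using transp_block by blast

lemma K4b: "B \<in> P \<Longrightarrow> card B \<ge> 2 \<Longrightarrow> B' \<in> P \<Longrightarrow> card B' \<ge> 2 \<Longrightarrow> EB B \<subseteq> EB B' \<Longrightarrow> B = B'"
  by (metis subsetD transp_block)

lemma K5:
  assumes B: "B \<in> P"
  shows "card (EB B) * fact (card B + 1) = card (Gs n P) * card (SS (Yb B))"
proof -
  define T where "T = (\<lambda>B'. if B' = B then SS (Yb B) else {q. q permutes Yb B'})"
  have T: "\<And>B'. B' \<in> P \<Longrightarrow> T B' \<subseteq> {p. p permutes Yb B'}" by (auto simp: T_def SS_def)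
  have "EB B = {p \<in> Gs n P. \<forall>B'\<in>P. rs B' p \<in> T B'}"
    using rs_permutes B by (auto simp: EB_def T_def)
  then have "card (EB B) = (\<Prod>B'\<in>P. card (T B'))" using card_Gs_sub[OF T] by simp
  also have "\<dots> = card (T B) * (\<Prod>B'\<in>P - {B}. card (T B'))"
    using prod.remove[OF finP B] .
  also have "card (T B) = card (SS (Yb B))" by (simp add: T_def)
  also have "(\<Prod>B'\<in>P - {B}. card (T B')) = (\<Prod>B'\<in>P - {B}. fact (card B' + 1))"
    by (rule prod.cong) (auto simp: T_def card_permutations finYb cardYb)
  finally have e1: "card (EB B) = card (SS (Yb B)) * (\<Prod>B'\<in>P - {B}. fact (card B' + 1))" .
  have e2: "card (Gs n P) = fact (card B + 1) * (\<Prod>B'\<in>P - {B}. fact (card B' + 1))"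
    using card_Gs prod.remove[OF finP B] by simp
  show ?thesis using e1 e2 by (simp add: ac_simps)
qed

end

definition FF :: "('a \<Rightarrow> 'a) set \<Rightarrow> ('a \<Rightarrow> 'a) set set" where
  "FF S = {Dp S x | x. x \<in> S} - {S}"

definition MM :: "('a \<Rightarrow> 'a) set \<Rightarrow> ('a \<Rightarrow> 'a) set set" where
  "MM S = {D \<in> FF S. \<forall>D'\<in>FF S. D \<subseteq> D' \<longrightarrow> D = D'}"

lemma MM_transport:
  fixes \<phi> :: "('a \<Rightarrow> 'a) \<Rightarrow> ('b \<Rightarrow> 'b)"
  assumes bij: "bij_betw \<phi> S S'" and hom: "\<And>a b. a \<in> S \<Longrightarrow> b \<in> S \<Longrightarrow> \<phi> (a \<circ> b) = \<phi> a \<circ> \<phi> b"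
    and idS: "id \<in> S" and cl: "\<And>a b. a \<in> S \<Longrightarrow> b \<in> S \<Longrightarrow> a \<circ> b \<in> S"
    and injS': "\<And>a. a \<in> S' \<Longrightarrow> inj a"
  shows "card {D \<in> MM S. Q (card D)} = card {D \<in> MM S'. Q (card D)}"
proof -
  have injp: "inj_on \<phi> S" and img: "\<phi> ` S = S'" using bij by (auto simp: bij_betw_def)
  have pS: "a \<in> S \<Longrightarrow> \<phi> a \<in> S'" for a using img by blast
  have pid: "\<phi> id = id"
  proof -
    have e: "\<phi> id \<circ> \<phi> id = \<phi> id" using hom[OF idS idS] by simp
    have ie: "inj (\<phi> id)" using injS'[OF pS[OF idS]] .
    show ?thesis
    proof
      fix x
      have "\<phi> id (\<phi> id x) = \<phi> id x" using fun_cong[OF e, of x] by simp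
      then show "\<phi> id x = id x" using ie by (simp add: inj_eq)
    qed
  qed
  have gh_iff: "g \<circ> h = id \<longleftrightarrow> \<phi> g \<circ> \<phi> h = id" if "g \<in> S" "h \<in> S" for g h
  proof
    assume "g \<circ> h = id" then show "\<phi> g \<circ> \<phi> h = id" using hom[OF that] pid by simp
  next
    assume "\<phi> g \<circ> \<phi> h = id"
    then have "\<phi> (g \<circ> h) = \<phi> id" using hom[OF that] pid by simp
    then show "g \<circ> h = id" using injp cl[OF that] idS by (meson inj_onD)
  qed
  have hom3: "\<phi> (a \<circ> (b \<circ> c \<circ> d)) = \<phi> a \<circ> (\<phi> b \<circ> \<phi> c \<circ> \<phi> d)" if "a \<in> S" "b \<in> S" "c \<in> S" "d \<in> S" for a b c d
    using that by (simp add: hom cl)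
  have hom3': "\<phi> ((b \<circ> c \<circ> d) \<circ> a) = (\<phi> b \<circ> \<phi> c \<circ> \<phi> d) \<circ> \<phi> a" if "a \<in> S" "b \<in> S" "c \<in> S" "d \<in> S" for a b c d
    using that by (simp add: hom cl)
  have Dimg: "\<phi> ` Dp S x = Dp S' (\<phi> x)" if x: "x \<in> S" for x
  proof
    show "\<phi> ` Dp S x \<subseteq> Dp S' (\<phi> x)"
    proof
      fix z' assume "z' \<in> \<phi> ` Dp S x"
      then obtain z where z: "z \<in> Dp S x" "z' = \<phi> z" by blast
      have zS: "z \<in> S" using z by (simp add: Dp_def)
      have "z' \<circ> (g' \<circ> \<phi> x \<circ> h') = (g' \<circ> \<phi> x \<circ> h') \<circ> z'" if gh': "g' \<in> S'" "h' \<in> S'" "g' \<circ> h' = id" for g' h'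
      proof -
        obtain g h where gh: "g \<in> S" "h \<in> S" "g' = \<phi> g" "h' = \<phi> h" using gh'(1,2) img by blast
        then have "g \<circ> h = id" using gh_iff gh'(3) by simp
        then have "z \<circ> (g \<circ> x \<circ> h) = (g \<circ> x \<circ> h) \<circ> z" using z gh by (simp add: Dp_def)
        then have "\<phi> (z \<circ> (g \<circ> x \<circ> h)) = \<phi> ((g \<circ> x \<circ> h) \<circ> z)" by simp
        then show ?thesis using hom3[OF zS gh(2) x gh(1)] hom3'[OF zS gh(1) x gh(2)] hom3[OF zS gh(1) x gh(2)]
          gh z(2) by simp
      qed
      then show "z' \<in> Dp S' (\<phi> x)" using z pS[OF zS] by (simp add: Dp_def)
    qed
    show "Dp S' (\<phi> x) \<subseteq> \<phi> ` Dp S x"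
    proof
      fix z' assume z': "z' \<in> Dp S' (\<phi> x)"
      then obtain z where z: "z \<in> S" "z' = \<phi> z" using img by (auto simp: Dp_def)
      have "z \<circ> (g \<circ> x \<circ> h) = (g \<circ> x \<circ> h) \<circ> z" if g: "g \<in> S" and h: "h \<in> S" and gh: "g \<circ> h = id" for g h
      proof -
        have "\<phi> g \<circ> \<phi> h = id" using gh_iff[OF g h] gh by simp
        then have "z' \<circ> (\<phi> g \<circ> \<phi> x \<circ> \<phi> h) = (\<phi> g \<circ> \<phi> x \<circ> \<phi> h) \<circ> z'"
          using z' pS[OF g] pS[OF h] by (simp add: Dp_def)
        then have "\<phi> (z \<circ> (g \<circ> x \<circ> h)) = \<phi> ((g \<circ> x \<circ> h) \<circ> z)"
          using hom3[OF z(1) g x h] hom3'[OF z(1) g x h] z(2) by simp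
        then show ?thesis using injp cl z(1) g x h by (meson inj_onD)
      qed
      then have "z \<in> Dp S x" using z(1) by (simp add: Dp_def)
      then show "z' \<in> \<phi> ` Dp S x" using z(2) by blast
    qed
  qed
  let ?\<psi> = "\<lambda>D. \<phi> ` D"
  have DpS: "Dp S x \<subseteq> S" for x by (auto simp: Dp_def)
  have FFsub: "D \<in> FF S \<Longrightarrow> D \<subseteq> S" for D using DpS by (auto simp: FF_def)
  have psi_sub: "?\<psi> D1 \<subseteq> ?\<psi> D2 \<longleftrightarrow> D1 \<subseteq> D2" if D12: "D1 \<subseteq> S" "D2 \<subseteq> S" for D1 D2
  proof
    assume sub: "?\<psi> D1 \<subseteq> ?\<psi> D2"
    show "D1 \<subseteq> D2"
    proof
      fix x assume x: "x \<in> D1"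
      then obtain y where "y \<in> D2" "\<phi> x = \<phi> y" using sub by blast
      then show "x \<in> D2" using injp D12 x by (metis inj_onD subsetD)
    qed
  qed auto
  have psi_eq: "?\<psi> D1 = ?\<psi> D2 \<longleftrightarrow> D1 = D2" if D12: "D1 \<subseteq> S" "D2 \<subseteq> S" for D1 D2
  proof
    assume e: "?\<psi> D1 = ?\<psi> D2"
    have "D1 \<subseteq> D2" using psi_sub[OF D12] e by simp
    moreover have "D2 \<subseteq> D1" using psi_sub[OF D12(2,1)] e by simp
    ultimately show "D1 = D2" by (rule equalityI)
  qed simp
  have FFimg: "?\<psi> ` FF S = FF S'"
  proof
    show "?\<psi> ` FF S \<subseteq> FF S'"
    proof
      fix D' assume "D' \<in> ?\<psi> ` FF S"
      then obtain x where x: "x \<in> S" "Dp S x \<noteq> S" "D' = ?\<psi> (Dp S x)" by (auto simp: FF_def)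
      have "?\<psi> (Dp S x) \<noteq> ?\<psi> S" using psi_eq[OF DpS order_refl] x(2) by simp
      then show "D' \<in> FF S'" using x Dimg[OF x(1)] pS[OF x(1)] img by (auto simp: FF_def)
    qed
    show "FF S' \<subseteq> ?\<psi> ` FF S"
    proof
      fix D' assume "D' \<in> FF S'"
      then obtain x' where x': "x' \<in> S'" "D' = Dp S' x'" "D' \<noteq> S'" by (auto simp: FF_def)
      then obtain x where x: "x \<in> S" "x' = \<phi> x" using img by blast
      have ne: "Dp S x \<noteq> S"
      proof
        assume "Dp S x = S"
        then have "D' = S'" using x' x Dimg[OF x(1)] img by simp
        then show False using x'(3) by simp
      qed
      have "Dp S x \<in> FF S" using x(1) ne by (auto simp: FF_def)
      moreover have "D' = ?\<psi> (Dp S x)" using x x' Dimg[OF x(1)] by simp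
      ultimately show "D' \<in> ?\<psi> ` FF S" by blast
    qed
  qed
  have MMimg: "?\<psi> ` MM S = MM S'"
  proof
    show "?\<psi> ` MM S \<subseteq> MM S'"
    proof
      fix D' assume "D' \<in> ?\<psi> ` MM S"
      then obtain D where D: "D \<in> MM S" "D' = ?\<psi> D" by blast
      have DF: "D \<in> FF S" and Dmax: "\<And>E. E \<in> FF S \<Longrightarrow> D \<subseteq> E \<Longrightarrow> D = E" using D by (auto simp: MM_def)
      have "D' \<in> FF S'" using DF D(2) FFimg by blast
      moreover have "D' = E'" if E'F: "E' \<in> FF S'" "D' \<subseteq> E'" for E'
      proof -
        have "E' \<in> ?\<psi> ` FF S" using E'F(1) FFimg by simp
        then obtain E where E: "E \<in> FF S" "E' = ?\<psi> E" by (rule imageE) simp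
        have "D \<subseteq> E" using psi_sub[OF FFsub[OF DF] FFsub[OF E(1)]] E'F(2) D(2) E(2) by simp
        then show ?thesis using Dmax[OF E(1)] D(2) E(2) by simp
      qed
      ultimately show "D' \<in> MM S'" by (simp add: MM_def)
    qed
    show "MM S' \<subseteq> ?\<psi> ` MM S"
    proof
      fix D' assume D': "D' \<in> MM S'"
      then have "D' \<in> FF S'" by (simp add: MM_def)
      then have "D' \<in> ?\<psi> ` FF S" using FFimg by simp
      then obtain D where D: "D \<in> FF S" "D' = ?\<psi> D" by (rule imageE) simp
      have "D = E" if "E \<in> FF S" "D \<subseteq> E" for E
      proof -
        have "?\<psi> E \<in> ?\<psi> ` FF S" using that(1) by (rule imageI)
        then have "?\<psi> E \<in> FF S'" using FFimg by simp
        moreover have "D' \<subseteq> ?\<psi> E" using D(2) that(2) by auto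
        ultimately have "D' = ?\<psi> E" using D' by (simp add: MM_def)
        then show ?thesis using psi_eq[OF FFsub[OF D(1)] FFsub[OF that(1)]] D(2) by simp
      qed
      then have "D \<in> MM S" using D(1) by (simp add: MM_def)
      then show "D' \<in> ?\<psi> ` MM S" using D(2) by blast
    qed
  qed
  have MMsub: "D \<in> MM S \<Longrightarrow> D \<subseteq> S" for D using FFsub by (simp add: MM_def)
  have cardpsi: "D \<subseteq> S \<Longrightarrow> card (?\<psi> D) = card D" for D
    using injp by (meson card_image inj_on_subset)
  have "{D' \<in> MM S'. Q (card D')} = ?\<psi> ` {D \<in> MM S. Q (card D)}"
  proof
    show "?\<psi> ` {D \<in> MM S. Q (card D)} \<subseteq> {D' \<in> MM S'. Q (card D')}"
      using MMimg cardpsi MMsub by auto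
    show "{D' \<in> MM S'. Q (card D')} \<subseteq> ?\<psi> ` {D \<in> MM S. Q (card D)}"
    proof
      fix D' assume D': "D' \<in> {D' \<in> MM S'. Q (card D')}"
      then have "D' \<in> ?\<psi> ` MM S" using MMimg by simp
      then obtain D where D: "D \<in> MM S" "D' = ?\<psi> D" by (rule imageE) simp
      then have "Q (card D)" using D' cardpsi[OF MMsub[OF D(1)]] by simp
      then show "D' \<in> ?\<psi> ` {D \<in> MM S. Q (card D)}" using D by blast
    qed
  qed
  moreover have "inj_on ?\<psi> {D \<in> MM S. Q (card D)}"
    using psi_eq MMsub by (auto simp: inj_on_def)
  ultimately show ?thesis by (simp add: card_image)
qed

definition sb :: "nat \<Rightarrow> nat \<Rightarrow> bool" where
  "sb m s \<longleftrightarrow> (if m = 3 then 2 \<le> s \<and> s \<le> 3 else if m = 4 then 2 \<le> s \<and> s \<le> 4 else s = 1)"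

lemma fact_ge5: "m \<ge> 5 \<Longrightarrow> fact m \<ge> (120::nat)"
proof -
  assume "m \<ge> 5"
  then have "fact 5 \<le> (fact m :: nat)" by (rule fact_mono)
  then show ?thesis by (simp add: fact_numeral)
qed

lemma sb_inj:
  assumes "m1 \<ge> 3" "m2 \<ge> 3" "sb m1 s1" "sb m2 s2" "fact m1 * s2 = fact m2 * (s1::nat)"
  shows "m1 = m2"
proof (rule ccontr)
  assume ne: "m1 \<noteq> m2"
  have f3: "fact 3 = (6::nat)" and f4: "fact 4 = (24::nat)" by (simp_all add: fact_numeral)
  have key: False if ab: "a < b" "a \<ge> 3" "sb a sa" "sb b sb'" "fact a * sb' = fact b * (sa::nat)" for a b sa sb'
  proof -
    note that = ab
    consider "a = 3" "b = 4" | "a = 3 \<or> a = 4" "b \<ge> 5" | "a \<ge> 5" using ab(1,2) by linarith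
    then show False
    proof cases
      case 1
      then have "fact a = (6::nat)" "fact b = (24::nat)" using f3 f4 by simp_all
      then have "6 * sb' = 24 * sa" using ab(5) by simp
      moreover have "2 \<le> sa" "sb' \<le> 4" using 1 ab(3,4) by (auto simp: sb_def)
      ultimately show False by linarith
    next
      case 2
      then have "sb' = 1" "2 \<le> sa" using that by (auto simp: sb_def)
      moreover have "fact a \<le> (24::nat)" using 2 f3 f4 by auto
      moreover have "fact b \<ge> (120::nat)" using fact_ge5 2 by blast
      ultimately have "fact a * sb' \<le> (24::nat)" "(120::nat) * 2 \<le> fact b * sa"
        by (simp, intro mult_le_mono) auto
      then show False using ab(5) by linarith
    next
      case 3
      then have "sa = 1" "sb' = 1" using that by (auto simp: sb_def)
      moreover have "fact a < (fact b :: nat)" using that(1) 3 by (intro fact_less_mono_nat) auto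
      ultimately show False using that(5) by simp
    qed
  qed
  show False
  proof (cases "m1 < m2")
    case True show False by (rule key[OF True assms(1,3,4,5)])
  next
    case False
    then have "m2 < m1" using ne by simp
    then show False using key[of m2 m1 s2 s1] assms by simp
  qed
qed

definition Qc :: "nat \<Rightarrow> nat \<Rightarrow> nat \<Rightarrow> bool" where
  "Qc N k c \<longleftrightarrow> (\<exists>s. c * fact (k+1) = N * s \<and> sb (k+1) s)"

context part begin

lemma EB_FF: "B \<in> P \<Longrightarrow> card B \<ge> 2 \<Longrightarrow> EB B \<in> FF (Gs n P)"
  using K1 K4a by (metis (mono_tags, lifting) DiffI FF_def mem_Collect_eq singletonD)

lemma FF_sub_EB: "D \<in> FF (Gs n P) \<Longrightarrow> \<exists>B\<in>P. card B \<ge> 2 \<and> D \<subseteq> EB B"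
proof -
  assume "D \<in> FF (Gs n P)"
  then obtain x where x: "x \<in> Gs n P" "D = Dp (Gs n P) x" "D \<noteq> Gs n P" by (auto simp: FF_def)
  then obtain B where B: "B \<in> P" "card B \<ge> 2" "rs B x \<noteq> id" using K3 by blast
  then show ?thesis using K2[OF x(1) B] x(2) by blast
qed

lemma MM_Gs: "MM (Gs n P) = EB ` {B \<in> P. card B \<ge> 2}"
proof
  show "MM (Gs n P) \<subseteq> EB ` {B \<in> P. card B \<ge> 2}"
  proof
    fix D assume D: "D \<in> MM (Gs n P)"
    then have DF: "D \<in> FF (Gs n P)" by (simp add: MM_def)
    obtain B where B: "B \<in> P" "card B \<ge> 2" "D \<subseteq> EB B" using FF_sub_EB[OF DF] by blast
    have "D = EB B" using D B EB_FF[OF B(1,2)] by (simp add: MM_def)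
    then show "D \<in> EB ` {B \<in> P. card B \<ge> 2}" using B by blast
  qed
  show "EB ` {B \<in> P. card B \<ge> 2} \<subseteq> MM (Gs n P)"
  proof
    fix D assume "D \<in> EB ` {B \<in> P. card B \<ge> 2}"
    then obtain B where B: "B \<in> P" "card B \<ge> 2" "D = EB B" by blast
    have "EB B = E" if E: "E \<in> FF (Gs n P)" "EB B \<subseteq> E" for E
    proof -
      obtain B' where B': "B' \<in> P" "card B' \<ge> 2" "E \<subseteq> EB B'" using FF_sub_EB[OF E(1)] by blast
      have "B = B'" using K4b[OF B(1,2) B'(1,2)] E(2) B'(3) by blast
      then show ?thesis using E(2) B'(3) by blast
    qed
    then show "D \<in> MM (Gs n P)" using B EB_FF[OF B(1,2)] by (simp add: MM_def)
  qed
qed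

lemma EB_inj: "inj_on EB {B \<in> P. card B \<ge> 2}"
  by (rule inj_onI) (use K4b in blast)

lemma Gs_pos: "card (Gs n P) > 0"
proof -
  have "finite (Gs n P)"
    by (rule finite_subset[OF _ finite_permutations[OF finKV]]) (auto simp: Gs_def)
  then show ?thesis using Gs_id by (auto simp: card_gt_0_iff)
qed

lemma EB_card_pos: "B \<in> P \<Longrightarrow> card (EB B) > 0"
proof -
  assume B: "B \<in> P"
  have "finite (EB B)"
    by (rule finite_subset[OF _ finite_permutations[OF finKV]]) (auto simp: Gs_def EB_def)
  moreover have "id \<in> EB B"
  proof -
    have "rs B id = id" by (simp add: rs_def fun_eq_iff)
    then show ?thesis using Gs_id by (simp add: EB_def SS_def permutes_id)
  qed
  ultimately show ?thesis by (auto simp: card_gt_0_iff)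
qed

lemma sb_SS: "B \<in> P \<Longrightarrow> card B \<ge> 2 \<Longrightarrow> sb (card B + 1) (card (SS (Yb B)))"
proof -
  assume B: "B \<in> P" "card B \<ge> 2"
  have c3: "card (Yb B) \<ge> 3" using cardYb[OF B(1)] B(2) by simp
  note SC = SS_card[OF finYb[OF B(1)] c3]
  show ?thesis
    using SC cardYb[OF B(1)] B(2) by (auto simp: sb_def)
qed

lemma Qc_EB:
  assumes B: "B \<in> P" "card B \<ge> 2" and k: "k \<ge> 2"
  shows "Qc (card (Gs n P)) k (card (EB B)) \<longleftrightarrow> card B = k"
proof
  assume "card B = k"
  then show "Qc (card (Gs n P)) k (card (EB B))"
    using K5[OF B(1)] sb_SS[OF B] by (auto simp: Qc_def)
next
  assume "Qc (card (Gs n P)) k (card (EB B))"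
  then obtain s where s: "card (EB B) * fact (k+1) = card (Gs n P) * s" "sb (k+1) s" by (auto simp: Qc_def)
  let ?c = "card (EB B)" and ?N = "card (Gs n P)" and ?s0 = "card (SS (Yb B))"
  have e0: "?c * fact (card B + 1) = ?N * ?s0" using K5[OF B(1)] .
  have "?c * (fact (k+1) * ?s0) = ?c * (fact (card B + 1) * s)"
  proof -
    have "?c * (fact (k+1) * ?s0) = (?c * fact (k+1)) * ?s0" by (simp add: ac_simps)
    also have "\<dots> = ?N * s * ?s0" using s(1) by simp
    also have "\<dots> = (?c * fact (card B + 1)) * s" using e0 by (simp add: ac_simps)
    finally show ?thesis by (simp add: ac_simps)
  qed
  then have "fact (k+1) * ?s0 = fact (card B + 1) * s" using EB_card_pos[OF B(1)] by simp
  then have "k + 1 = card B + 1" using sb_inj[of "k+1" "card B + 1" s ?s0] k B(2) s(2) sb_SS[OF B] by simp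
  then show "card B = k" by simp
qed

lemma count_blocks:
  assumes k: "k \<ge> 2"
  shows "card {B \<in> P. card B = k} = card {D \<in> MM (Gs n P). Qc (card (Gs n P)) k (card D)}"
proof -
  have "{D \<in> MM (Gs n P). Qc (card (Gs n P)) k (card D)} = EB ` {B \<in> P. card B = k}"
  proof
    show "{D \<in> MM (Gs n P). Qc (card (Gs n P)) k (card D)} \<subseteq> EB ` {B \<in> P. card B = k}"
    proof
      fix D assume D: "D \<in> {D \<in> MM (Gs n P). Qc (card (Gs n P)) k (card D)}"
      then obtain B where B: "B \<in> P" "card B \<ge> 2" "D = EB B" using MM_Gs by auto
      then have "card B = k" using D Qc_EB[OF B(1,2) k] by simp
      then show "D \<in> EB ` {B \<in> P. card B = k}" using B by blast
    qed
    show "EB ` {B \<in> P. card B = k} \<subseteq> {D \<in> MM (Gs n P). Qc (card (Gs n P)) k (card D)}"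
    proof
      fix D assume "D \<in> EB ` {B \<in> P. card B = k}"
      then obtain B where B: "B \<in> P" "card B = k" "D = EB B" by blast
      then have B2: "card B \<ge> 2" using k by simp
      have "D \<in> MM (Gs n P)" using MM_Gs B B2 by blast
      moreover have "Qc (card (Gs n P)) k (card D)" using Qc_EB[OF B(1) B2 k] B by simp
      ultimately show "D \<in> {D \<in> MM (Gs n P). Qc (card (Gs n P)) k (card D)}" by simp
    qed
  qed
  moreover have "inj_on EB {B \<in> P. card B = k}"
    using EB_inj by (rule inj_on_subset) (use k in auto)
  ultimately show ?thesis by (simp add: card_image)
qed

end

lemma fib_bij:
  assumes fA: "finite A" and fA': "finite A'"
    and eq: "\<And>k. card {a\<in>A. c a = k} = card {a\<in>A'. c' a = k}"
  obtains \<beta> where "bij_betw \<beta> A A'" "\<And>a. a \<in> A \<Longrightarrow> c' (\<beta> a) = c a"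
proof -
  have "\<forall>k. \<exists>f. bij_betw f {a\<in>A. c a = k} {a\<in>A'. c' a = k}"
  proof
    fix k
    show "\<exists>f. bij_betw f {a\<in>A. c a = k} {a\<in>A'. c' a = k}"
      using eq[of k] fA fA' by (intro finite_same_card_bij) auto
  qed
  then obtain F where F: "\<And>k. bij_betw (F k) {a\<in>A. c a = k} {a\<in>A'. c' a = k}" by metis
  define \<beta> where "\<beta> a = F (c a) a" for a
  have mem: "a \<in> A \<Longrightarrow> \<beta> a \<in> A' \<and> c' (\<beta> a) = c a" for a
    using F[of "c a"] by (auto simp: \<beta>_def bij_betw_def)
  have "bij_betw \<beta> A A'"
  proof (rule bij_betw_imageI)
    show "inj_on \<beta> A"
    proof (rule inj_onI)
      fix a1 a2 assume a: "a1 \<in> A" "a2 \<in> A" "\<beta> a1 = \<beta> a2"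
      then have "c a1 = c a2" using mem by metis
      then have "F (c a1) a1 = F (c a1) a2" using a(3) by (simp add: \<beta>_def)
      moreover have "inj_on (F (c a1)) {a\<in>A. c a = c a1}" using F by (auto simp: bij_betw_def)
      ultimately show "a1 = a2" using a(1,2) \<open>c a1 = c a2\<close> by (auto dest: inj_onD)
    qed
    show "\<beta> ` A = A'"
    proof
      show "\<beta> ` A \<subseteq> A'" using mem by auto
      show "A' \<subseteq> \<beta> ` A"
      proof
        fix a' assume a': "a' \<in> A'"
        then have "a' \<in> F (c' a') ` {a\<in>A. c a = c' a'}" using F[of "c' a'"] by (auto simp: bij_betw_def)
        then obtain a where a: "a \<in> A" "c a = c' a'" "a' = F (c' a') a" by auto
        then have "a' = \<beta> a" by (simp add: \<beta>_def)
        then show "a' \<in> \<beta> ` A" using a(1) by blast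
      qed
    qed
  qed
  then show ?thesis using that mem by blast
qed

lemma facet_map:
  assumes p: "partition_on {1..n+1} P" and p': "partition_on {1..n'+1} P'"
    and \<sigma>: "bij_betw \<sigma> {1..n+1} {1..n'+1}" and \<beta>: "bij_betw \<beta> P P'"
    and comp: "\<And>B. B \<in> P \<Longrightarrow> \<sigma> ` B = \<beta> B"
  shows "(\<lambda>F. case_sum (\<lambda>i. Inl (\<sigma> i)) (\<lambda>B. Inr (\<beta> B)) ` F) ` K_facets n P \<subseteq> K_facets n' P'"
proof
  let ?\<phi> = "case_sum (\<lambda>i. Inl (\<sigma> i)) (\<lambda>B. Inr (\<beta> B)) :: vtx \<Rightarrow> vtx"
  fix S' assume "S' \<in> (\<lambda>F. ?\<phi> ` F) ` K_facets n P"
  then obtain y where S': "S' = ?\<phi> ` y ` {1..n+1}"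
    and y: "\<forall>i\<in>{1..n+1}. y i = Inl i \<or> (\<exists>B\<in>P. i \<in> B \<and> y i = Inr B)" and yi: "inj_on y {1..n+1}"
    by (auto simp: K_facets_def)
  define \<sigma>i where "\<sigma>i = inv_into {1..n+1} \<sigma>"
  have \<sigma>i: "bij_betw \<sigma>i {1..n'+1} {1..n+1}" using \<sigma> by (simp add: \<sigma>i_def bij_betw_inv_into)
  have ss: "\<sigma> (\<sigma>i j) = j" if "j \<in> {1..n'+1}" for j using \<sigma> that by (simp add: \<sigma>i_def bij_betw_inv_into_right)
  define y' where "y' j = ?\<phi> (y (\<sigma>i j))" for j
  have img: "y' ` {1..n'+1} = S'"
  proof -
    have "y' ` {1..n'+1} = ?\<phi> ` y ` \<sigma>i ` {1..n'+1}" by (auto simp: y'_def image_image)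
    also have "\<sigma>i ` {1..n'+1} = {1..n+1}" using \<sigma>i by (simp add: bij_betw_def)
    finally show ?thesis using S' by simp
  qed
  have cond: "\<forall>j\<in>{1..n'+1}. y' j = Inl j \<or> (\<exists>B\<in>P'. j \<in> B \<and> y' j = Inr B)"
  proof
    fix j assume j: "j \<in> {1..n'+1}"
    let ?i = "\<sigma>i j"
    have i: "?i \<in> {1..n+1}" using \<sigma>i j by (auto simp: bij_betw_def)
    from y i consider "y ?i = Inl ?i" | B where "B \<in> P" "?i \<in> B" "y ?i = Inr B" by blast
    then show "y' j = Inl j \<or> (\<exists>B\<in>P'. j \<in> B \<and> y' j = Inr B)"
    proof cases
      case 1 then show ?thesis using ss[OF j] by (simp add: y'_def)
    next
      case (2 B)
      have "j \<in> \<beta> B" using comp[OF 2(1)] 2(2) ss[OF j] by (metis image_eqI)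
      moreover have "\<beta> B \<in> P'" using \<beta> 2(1) by (auto simp: bij_betw_def)
      ultimately show ?thesis using 2 by (auto simp: y'_def)
    qed
  qed
  have yKV: "y i \<in> Inl ` {1..n+1} \<union> Inr ` P" if iI: "i \<in> {1..n+1}" for i
  proof -
    from y iI consider "y i = Inl i" | B where "B \<in> P" "y i = Inr B" by blast
    then show ?thesis using iI by cases auto
  qed
  have si: "inj_on \<sigma> {1..n+1}" and bi: "inj_on \<beta> P" using \<sigma> \<beta> by (auto simp: bij_betw_def)
  have \<phi>inj: "inj_on ?\<phi> (Inl ` {1..n+1} \<union> Inr ` P)"
  proof (rule inj_onI)
    fix u v assume u: "u \<in> Inl ` {1..n+1} \<union> Inr ` P" and v: "v \<in> Inl ` {1..n+1} \<union> Inr ` P" and e: "?\<phi> u = ?\<phi> v"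
    show "u = v"
    proof (cases u)
      case (Inl i)
      then have i: "i \<in> {1..n+1}" using u by auto
      show ?thesis
      proof (cases v)
        case (Inl i')
        then have "i' \<in> {1..n+1}" using v by auto
        then show ?thesis using Inl \<open>u = Inl i\<close> e i si by (auto dest: inj_onD)
      next
        case (Inr B) then show ?thesis using \<open>u = Inl i\<close> e by simp
      qed
    next
      case (Inr B)
      then have B: "B \<in> P" using u by auto
      show ?thesis
      proof (cases v)
        case (Inl i') then show ?thesis using \<open>u = Inr B\<close> e by simp
      next
        case (Inr B')
        then have "B' \<in> P" using v by auto
        then show ?thesis using Inr \<open>u = Inr B\<close> e B bi by (auto dest: inj_onD)
      qed
    qed
  qed
  have "inj_on y' {1..n'+1}"
  proof (rule inj_onI)
    fix j1 j2 assume j: "j1 \<in> {1..n'+1}" "j2 \<in> {1..n'+1}" "y' j1 = y' j2"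
    have i: "\<sigma>i j1 \<in> {1..n+1}" "\<sigma>i j2 \<in> {1..n+1}" using \<sigma>i j by (auto simp: bij_betw_def)
    have "?\<phi> (y (\<sigma>i j1)) = ?\<phi> (y (\<sigma>i j2))" using j(3) by (simp add: y'_def)
    then have "y (\<sigma>i j1) = y (\<sigma>i j2)" using inj_onD[OF \<phi>inj _ yKV[OF i(1)] yKV[OF i(2)]] by blast
    then have "\<sigma>i j1 = \<sigma>i j2" using inj_onD[OF yi _ i] by blast
    then have "\<sigma> (\<sigma>i j1) = \<sigma> (\<sigma>i j2)" by simp
    then show "j1 = j2" using ss[OF j(1)] ss[OF j(2)] by simp
  qed
  then show "S' \<in> K_facets n' P'" using img cond unfolding K_facets_def by (intro CollectI exI[of _ y']) simp
qed

lemma facets_sub_KV: "S \<in> K_facets n P \<Longrightarrow> S \<subseteq> KV n P"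
  by (auto simp: K_facets_def KV_def)

lemma complex_from:
  assumes p: "partition_on {1..n+1} P" and p': "partition_on {1..n'+1} P'"
    and \<sigma>: "bij_betw \<sigma> {1..n+1} {1..n'+1}" and \<beta>: "bij_betw \<beta> P P'"
    and comp: "\<And>B. B \<in> P \<Longrightarrow> \<sigma> ` B = \<beta> B"
  shows "complex_iso (KV n P) (K_faces n P) (KV n' P') (K_faces n' P')"
proof -
  define \<sigma>i where "\<sigma>i = inv_into {1..n+1} \<sigma>"
  define \<beta>i where "\<beta>i = inv_into P \<beta>"
  have \<sigma>i: "bij_betw \<sigma>i {1..n'+1} {1..n+1}" using \<sigma> by (simp add: \<sigma>i_def bij_betw_inv_into)
  have \<beta>i: "bij_betw \<beta>i P' P" using \<beta> by (simp add: \<beta>i_def bij_betw_inv_into)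
  have Bsub: "B \<subseteq> {1..n+1}" if "B \<in> P" for B using p that by (auto simp: partition_on_def)
  have comp': "\<sigma>i ` B' = \<beta>i B'" if B': "B' \<in> P'" for B'
  proof -
    have B: "\<beta>i B' \<in> P" using \<beta>i B' by (auto simp: bij_betw_def)
    have e: "\<beta> (\<beta>i B') = B'" using \<beta> B' by (simp add: \<beta>i_def bij_betw_inv_into_right)
    have "\<sigma> ` \<beta>i B' = B'" using comp[OF B] e by simp
    then have "\<sigma>i ` B' = \<sigma>i ` \<sigma> ` \<beta>i B'" by simp
    also have "\<dots> = \<beta>i B'" using \<sigma> Bsub[OF B] by (simp add: \<sigma>i_def bij_betw_def inv_into_image_cancel)
    finally show ?thesis .
  qed
  let ?\<phi> = "case_sum (\<lambda>i. Inl (\<sigma> i)) (\<lambda>B. Inr (\<beta> B)) :: vtx \<Rightarrow> vtx"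
  let ?\<phi>i = "case_sum (\<lambda>i. Inl (\<sigma>i i)) (\<lambda>B. Inr (\<beta>i B)) :: vtx \<Rightarrow> vtx"
  have fm1: "(\<lambda>F. ?\<phi> ` F) ` K_facets n P \<subseteq> K_facets n' P'" by (rule facet_map[OF p p' \<sigma> \<beta> comp])
  have fm2: "(\<lambda>F. ?\<phi>i ` F) ` K_facets n' P' \<subseteq> K_facets n P" by (rule facet_map[OF p' p \<sigma>i \<beta>i comp'])
  have l1: "?\<phi>i (?\<phi> v) = v" if "v \<in> KV n P" for v
    using that \<sigma> \<beta> by (auto simp: KV_def \<sigma>i_def \<beta>i_def bij_betw_def)
  have l2: "?\<phi> (?\<phi>i v) = v" if "v \<in> KV n' P'" for v
    using that \<sigma> \<beta> by (auto simp: KV_def \<sigma>i_def \<beta>i_def bij_betw_inv_into_right)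
  have m1: "?\<phi> v \<in> KV n' P'" if v: "v \<in> KV n P" for v
  proof -
    from v consider i where "i \<in> {1..n+1}" "v = Inl i" | B where "B \<in> P" "v = Inr B" by (auto simp: KV_def)
    then show ?thesis
    proof cases
      case 1 then show ?thesis using bij_betw_apply[OF \<sigma> 1(1)] by (simp add: KV_def)
    next
      case 2 then show ?thesis using bij_betw_apply[OF \<beta> 2(1)] by (simp add: KV_def)
    qed
  qed
  have m2: "?\<phi>i v \<in> KV n P" if v: "v \<in> KV n' P'" for v
  proof -
    from v consider i where "i \<in> {1..n'+1}" "v = Inl i" | B where "B \<in> P'" "v = Inr B" by (auto simp: KV_def)
    then show ?thesis
    proof cases
      case 1 then show ?thesis using bij_betw_apply[OF \<sigma>i 1(1)] by (simp add: KV_def)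
    next
      case 2 then show ?thesis using bij_betw_apply[OF \<beta>i 2(1)] by (simp add: KV_def)
    qed
  qed
  have bij: "bij_betw ?\<phi> (KV n P) (KV n' P')"
    by (rule bij_betw_byWitness[where f'="?\<phi>i"]) (use l1 l2 m1 m2 in auto)
  have fac: "(\<lambda>F. ?\<phi> ` F) ` K_facets n P = K_facets n' P'"
  proof
    show "(\<lambda>F. ?\<phi> ` F) ` K_facets n P \<subseteq> K_facets n' P'" by (rule fm1)
    show "K_facets n' P' \<subseteq> (\<lambda>F. ?\<phi> ` F) ` K_facets n P"
    proof
      fix S' assume S': "S' \<in> K_facets n' P'"
      then have "?\<phi>i ` S' \<in> K_facets n P" using fm2 by blast
      moreover have "?\<phi> ` ?\<phi>i ` S' = S'"
        using l2 facets_sub_KV[OF S'] by (force simp: image_image)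
      ultimately show "S' \<in> (\<lambda>F. ?\<phi> ` F) ` K_facets n P" by (metis image_eqI)
    qed
  qed
  have "(\<lambda>F. ?\<phi> ` F) ` K_faces n P = K_faces n' P'"
  proof
    show "(\<lambda>F. ?\<phi> ` F) ` K_faces n P \<subseteq> K_faces n' P'"
    proof
      fix F' assume "F' \<in> (\<lambda>F. ?\<phi> ` F) ` K_faces n P"
      then obtain F S where F: "F' = ?\<phi> ` F" "F \<noteq> {}" "S \<in> K_facets n P" "F \<subseteq> S" by (auto simp: K_faces_def)
      have Sf: "?\<phi> ` S \<in> K_facets n' P'" using fac F(3) by blast
      have "F' \<noteq> {}" using F(1,2) by simp
      moreover have "F' \<subseteq> ?\<phi> ` S" using F(1,4) by auto
      ultimately show "F' \<in> K_faces n' P'" using Sf unfolding K_faces_def by blast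
    qed
    show "K_faces n' P' \<subseteq> (\<lambda>F. ?\<phi> ` F) ` K_faces n P"
    proof
      fix F' assume "F' \<in> K_faces n' P'"
      then obtain S' where F': "F' \<noteq> {}" "S' \<in> K_facets n' P'" "F' \<subseteq> S'" by (auto simp: K_faces_def)
      obtain S where S: "S \<in> K_facets n P" "S' = ?\<phi> ` S" using fac F'(2) by blast
      define F where "F = {v \<in> S. ?\<phi> v \<in> F'}"
      have "?\<phi> ` F = F'" using F'(3) S(2) by (auto simp: F_def)
      moreover have "F \<noteq> {}" using \<open>?\<phi> ` F = F'\<close> F'(1) by auto
      moreover have "F \<subseteq> S" by (auto simp: F_def)
      ultimately show "F' \<in> (\<lambda>F. ?\<phi> ` F) ` K_faces n P" using S(1) by (auto simp: K_faces_def)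
    qed
  qed
  then show ?thesis using bij unfolding complex_iso_def by blast
qed

lemma card_block_pos: "partition_on {1..(n::nat)+1} P \<Longrightarrow> B \<in> P \<Longrightarrow> card B \<ge> 1"
proof -
  assume p: "partition_on {1..n+1} P" and B: "B \<in> P"
  interpret part n P using p by unfold_locales
  show ?thesis using finB[OF B] nonemptyB[OF B] by (simp add: Suc_le_eq card_gt_0_iff)
qed

lemma prod_split:
  assumes p: "partition_on {1..(n::nat)+1} P"
  shows "(\<Prod>B\<in>P. fact (card B + 1) :: nat) = 2 ^ card {B\<in>P. card B = 1} * (\<Prod>B\<in>{B\<in>P. card B \<ge> 2}. fact (card B + 1))"
proof -
  interpret part n P using p by unfold_locales
  have P: "P = {B\<in>P. card B = 1} \<union> {B\<in>P. card B \<ge> 2}"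
  proof (intro equalityI subsetI)
    fix B assume "B \<in> P"
    then have "card B \<ge> 1" by (rule card_block_pos[OF p])
    then show "B \<in> {B\<in>P. card B = 1} \<union> {B\<in>P. card B \<ge> 2}" using \<open>B \<in> P\<close> by auto
  qed auto
  have "(\<Prod>B\<in>P. fact (card B + 1) :: nat) = (\<Prod>B\<in>{B\<in>P. card B = 1}. fact (card B + 1)) * (\<Prod>B\<in>{B\<in>P. card B \<ge> 2}. fact (card B + 1))"
  proof -
    have f1: "finite {B\<in>P. card B = 1}" and f2: "finite {B\<in>P. card B \<ge> 2}" using finP by auto
    have d: "{B\<in>P. card B = 1} \<inter> {B\<in>P. card B \<ge> 2} = {}" by auto
    show ?thesis by (subst P, rule prod.union_disjoint[OF f1 f2 d])
  qed
  also have "(\<Prod>B\<in>{B\<in>P. card B = 1}. fact (card B + 1) :: nat) = (\<Prod>B\<in>{B\<in>P. card B = 1}. 2)"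
    by (rule prod.cong) (auto simp: fact_numeral)
  finally show ?thesis by simp
qed

lemma sigma_construct:
  assumes p: "partition_on {1..(n::nat)+1} P" and p': "partition_on {1..(n'::nat)+1} P'"
    and \<beta>: "bij_betw \<beta> P P'" and cb: "\<And>B. B \<in> P \<Longrightarrow> card (\<beta> B) = card B"
  obtains \<sigma> where "bij_betw \<sigma> {1..n+1} {1..n'+1}" "\<And>B. B \<in> P \<Longrightarrow> \<sigma> ` B = \<beta> B"
proof -
  interpret A: part n P using p by unfold_locales
  interpret B: part n' P' using p' by unfold_locales
  have "\<forall>B\<in>P. \<exists>\<psi>. bij_betw \<psi> B (\<beta> B)"
  proof
    fix B assume B: "B \<in> P"
    have "\<beta> B \<in> P'" using \<beta> B by (auto simp: bij_betw_def)
    then show "\<exists>\<psi>. bij_betw \<psi> B (\<beta> B)"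
      using A.finB[OF B] B.finB cb[OF B] by (intro finite_same_card_bij) auto
  qed
  then obtain \<Psi> where \<Psi>: "\<And>B. B \<in> P \<Longrightarrow> bij_betw (\<Psi> B) B (\<beta> B)" by metis
  define bk where "bk i = (SOME B. B \<in> P \<and> i \<in> B)" for i
  have bk: "bk i = B" if Bi: "B \<in> P" "i \<in> B" for i B
    unfolding bk_def
  proof (rule some_equality)
    show "B \<in> P \<and> i \<in> B" using Bi by simp
    fix B' assume "B' \<in> P \<and> i \<in> B'"
    then show "B' = B" using A.disjB[of B' B i] Bi by blast
  qed
  define \<sigma> where "\<sigma> i = \<Psi> (bk i) i" for i
  have \<sigma>B: "\<sigma> ` B = \<beta> B" if B: "B \<in> P" for B
  proof -
    have "\<sigma> ` B = \<Psi> B ` B" using bk[OF B] by (auto simp: \<sigma>_def)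
    also have "\<dots> = \<beta> B" using \<Psi>[OF B] by (simp add: bij_betw_def)
    finally show ?thesis .
  qed
  have U: "{1..n+1} = \<Union>P" "{1..n'+1} = \<Union>P'" using partition_onD1[OF A.part] partition_onD1[OF B.part] by simp_all
  have "bij_betw \<sigma> {1..n+1} {1..n'+1}"
  proof (rule bij_betw_imageI)
    show "inj_on \<sigma> {1..n+1}"
    proof (rule inj_onI)
      fix i j assume i: "i \<in> {1..n+1}" and j: "j \<in> {1..n+1}" and e: "\<sigma> i = \<sigma> j"
      have "i \<in> \<Union>P" using i by (simp only: U(1))
      have "j \<in> \<Union>P" using j by (simp only: U(1))
      obtain B1 where B1: "B1 \<in> P" "i \<in> B1" using \<open>i \<in> \<Union>P\<close> by blast
      obtain B2 where B2: "B2 \<in> P" "j \<in> B2" using \<open>j \<in> \<Union>P\<close> by blast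
      have s1: "\<sigma> i \<in> \<beta> B1" using \<sigma>B[OF B1(1)] B1(2) by blast
      have s2: "\<sigma> j \<in> \<beta> B2" using \<sigma>B[OF B2(1)] B2(2) by blast
      have p1: "\<beta> B1 \<in> P'" using bij_betw_apply[OF \<beta>(1) B1(1)] .
      have p2: "\<beta> B2 \<in> P'" using bij_betw_apply[OF \<beta>(1) B2(1)] .
      have "\<beta> B1 = \<beta> B2" using B.disjB[OF p1 p2 s1] s2 e by simp
      then have B12: "B1 = B2" using \<beta>(1) B1(1) B2(1) by (auto simp: bij_betw_def dest: inj_onD)
      have "\<Psi> B1 i = \<Psi> B1 j" using e bk[OF B1] bk[OF B2] B12 by (simp add: \<sigma>_def)
      moreover have "inj_on (\<Psi> B1) B1" using \<Psi>[OF B1(1)] by (simp add: bij_betw_def)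
      ultimately show "i = j" using B1(2) B2(2) B12 by (auto dest: inj_onD)
    qed
    have "\<sigma> ` \<Union>P = \<Union>P'"
    proof -
      have "\<sigma> ` \<Union>P = (\<Union>B\<in>P. \<sigma> ` B)" by auto
      also have "\<dots> = (\<Union>B\<in>P. \<beta> B)" using \<sigma>B by simp
      also have "\<dots> = \<Union>P'" using \<beta>(1) by (simp add: bij_betw_def)
      finally show ?thesis .
    qed
    then show "\<sigma> ` {1..n+1} = {1..n'+1}" by (simp only: U)
  qed
  then show ?thesis using that \<sigma>B by blast
qed
theorem proposition2p9:
  fixes n n' :: nat and P P' :: "nat set set"
  assumes "n \<ge> 2" and "n' \<ge> 2"
    and "partition_on {1..n+1} P" and "partition_on {1..n'+1} P'"
    and "Cox n P \<cong> Cox n' P'"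
  shows "complex_iso (KV n P) (K_faces n P) (KV n' P') (K_faces n' P')"
proof -
  interpret A: part n P using assms(3) by unfold_locales
  interpret B: part n' P' using assms(4) by unfold_locales
  obtain \<phi> where \<phi>: "\<phi> \<in> iso (Cox n P) (Cox n' P')" using assms(5) by (auto simp: is_iso_def)
  have "bij_betw \<phi> (carrier (Cox n P)) (carrier (Cox n' P'))" using \<phi> unfolding iso_def by blast
  then have bij\<phi>: "bij_betw \<phi> (Gs n P) (Gs n' P')" by (simp only: A.Cox_carrier B.Cox_carrier)
  have hom\<phi>: "\<phi> (a \<circ> b) = \<phi> a \<circ> \<phi> b" if ab: "a \<in> Gs n P" "b \<in> Gs n P" for a b
  proof -
    have "\<phi> \<in> hom (Cox n P) (Cox n' P')" using \<phi> unfolding iso_def by blast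
    then have "\<forall>x\<in>carrier (Cox n P). \<forall>y\<in>carrier (Cox n P). \<phi> (x \<otimes>\<^bsub>Cox n P\<^esub> y) = \<phi> x \<otimes>\<^bsub>Cox n' P'\<^esub> \<phi> y"
      unfolding hom_def by blast
    then have "\<phi> (a \<otimes>\<^bsub>Cox n P\<^esub> b) = \<phi> a \<otimes>\<^bsub>Cox n' P'\<^esub> \<phi> b" using ab A.Cox_carrier by blast
    then show ?thesis by (simp only: A.Cox_mult B.Cox_mult)
  qed
  have N: "card (Gs n P) = card (Gs n' P')" using bij\<phi> by (rule bij_betw_same_card)
  have inj': "inj a" if "a \<in> Gs n' P'" for a using that by (auto simp: Gs_def permutes_inj)
  have cnt2: "card {B \<in> P. card B = k} = card {B \<in> P'. card B = k}" if k: "k \<ge> 2" for k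
  proof -
    have "card {B \<in> P. card B = k} = card {D \<in> MM (Gs n P). Qc (card (Gs n P)) k (card D)}"
      by (rule A.count_blocks[OF k])
    also have "\<dots> = card {D \<in> MM (Gs n' P'). Qc (card (Gs n P)) k (card D)}"
      by (rule MM_transport[OF bij\<phi> hom\<phi> A.Gs_id A.Gs_comp inj'])
    also have "\<dots> = card {B \<in> P'. card B = k}" by (simp only: N B.count_blocks[OF k])
    finally show ?thesis .
  qed
  define P2 where "P2 = {B\<in>P. card B \<ge> 2}"
  define P2' where "P2' = {B\<in>P'. card B \<ge> 2}"
  have fib2: "card {a\<in>P2. card a = k} = card {a\<in>P2'. card a = k}" for k
  proof (cases "k \<ge> 2")
    case True
    have "{a\<in>P2. card a = k} = {B \<in> P. card B = k}" "{a\<in>P2'. card a = k} = {B \<in> P'. card B = k}"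
      using True by (auto simp: P2_def P2'_def)
    then show ?thesis using cnt2[OF True] by simp
  next
    case False
    then have e1: "{a\<in>P2. card a = k} = {}" and e2: "{a\<in>P2'. card a = k} = {}" by (auto simp: P2_def P2'_def)
    show ?thesis by (simp only: e1 e2)
  qed
  obtain \<beta>2 where \<beta>2: "bij_betw \<beta>2 P2 P2'" "\<And>a. a \<in> P2 \<Longrightarrow> card (\<beta>2 a) = card a"
    using fib_bij[OF _ _ fib2] A.finP B.finP by (auto simp: P2_def P2'_def)
  have X: "(\<Prod>B\<in>P2. fact (card B + 1) :: nat) = (\<Prod>B\<in>P2'. fact (card B + 1))"
  proof -
    have "(\<Prod>B\<in>P2. fact (card (\<beta>2 B) + 1)) = (\<Prod>B\<in>P2'. fact (card B + 1) :: nat)"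
      by (rule prod.reindex_bij_betw[OF \<beta>2(1)])
    then have "(\<Prod>B\<in>P2'. fact (card B + 1) :: nat) = (\<Prod>B\<in>P2. fact (card (\<beta>2 B) + 1))" by (rule sym)
    also have "\<dots> = (\<Prod>B\<in>P2. fact (card B + 1))" using \<beta>2(2) by (intro prod.cong) auto
    finally show ?thesis by simp
  qed
  have Xpos: "(\<Prod>B\<in>P2. fact (card B + 1) :: nat) > 0" by (simp add: prod_pos)
  have e1: "card (Gs n P) = 2 ^ card {B\<in>P. card B = 1} * (\<Prod>B\<in>P2. fact (card B + 1))"
    by (simp only: A.card_Gs prod_split[OF assms(3)] P2_def)
  have e2: "card (Gs n' P') = 2 ^ card {B\<in>P'. card B = 1} * (\<Prod>B\<in>P2'. fact (card B + 1))"
    by (simp only: B.card_Gs prod_split[OF assms(4)] P2'_def)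
  have "2 ^ card {B\<in>P. card B = 1} * (\<Prod>B\<in>P2. fact (card B + 1)) = 2 ^ card {B\<in>P'. card B = 1} * (\<Prod>B\<in>P2. fact (card B + 1) :: nat)"
    using N e1 e2 X by simp
  then have "(2::nat) ^ card {B\<in>P. card B = 1} = 2 ^ card {B\<in>P'. card B = 1}" using Xpos by simp
  then have cnt1: "card {B\<in>P. card B = 1} = card {B\<in>P'. card B = 1}" by simp
  have fib: "card {a\<in>P. card a = k} = card {a\<in>P'. card a = k}" for k
  proof -
    consider "k = 0" | "k = 1" | "k \<ge> 2" by linarith
    then show ?thesis
    proof cases
      case 1
      have e1: "{a\<in>P. card a = k} = {}"
      proof (rule equals0I)
        fix a assume "a \<in> {a\<in>P. card a = k}"
        then have "a \<in> P" "card a = 0" using 1 by auto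
        then show False using card_block_pos[OF assms(3), of a] by simp
      qed
      have e2: "{a\<in>P'. card a = k} = {}"
      proof (rule equals0I)
        fix a assume "a \<in> {a\<in>P'. card a = k}"
        then have "a \<in> P'" "card a = 0" using 1 by auto
        then show False using card_block_pos[OF assms(4), of a] by simp
      qed
      show ?thesis by (simp only: e1 e2)
    next
      case 2 then show ?thesis using cnt1 by simp
    next
      case 3 then show ?thesis using cnt2 by simp
    qed
  qed
  obtain \<beta> where \<beta>: "bij_betw \<beta> P P'" "\<And>B. B \<in> P \<Longrightarrow> card (\<beta> B) = card B"
    using fib_bij[OF A.finP B.finP fib] by blast
  obtain \<sigma> where \<sigma>: "bij_betw \<sigma> {1..n+1} {1..n'+1}" "\<And>B. B \<in> P \<Longrightarrow> \<sigma> ` B = \<beta> B"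
    using sigma_construct[OF assms(3,4) \<beta>] by blast
  show ?thesis by (rule complex_from[OF assms(3,4) \<sigma>(1) \<beta>(1) \<sigma>(2)])
qed

end
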